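(* Let $V$ be a finite set of discrete random variables with joint distribution $P$, and let $\mathcal{G}_{\texttt{FD}}$ be the FD-induced graph on $V$ (assumed acyclic). Let $Z\in V$ be a sink node of $\mathcal{G}_{\texttt{FD}}$, i.e. $Z$ has no outgoing edges in $\mathcal{G}_{\texttt{FD}}$, and let $X_i$ be any node with $X_i\xrightarrow{\texttt{FD}} Z$ (an edge $(X_i,Z)$ of $\mathcal{G}_{\texttt{FD}}$). Suppose $\mathcal{S}_1$ is a harmonious skeleton over $V\setminus\{Z\}$ with respect to the marginal distribution of $P$ on $V\setminus\{Z\}$, and let $\mathcal{S}_2$ be the graph on $V$ whose only edge is the undirected edge $X_i - Z$. Then $\mathcal{S}=\mathcal{S}_1\cup\mathcal{S}_2$ (the undirected graph on $V$ whose edge set is the union of the edge sets) is a harmonious skeleton over $V$ with respect to $P$.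
   Context: Standing assumption: every variable takes at least two values with positive probability. Functional dependency: $X\xrightarrow{\texttt{FD}} Y$ means $Y=f(X)$ almost surely for some deterministic function $f$. The FD-induced graph $\mathcal{G}_{\texttt{FD}}$ has vertex set $V$ and a directed edge $(X,Y)$ whenever $X\xrightarrow{\texttt{FD}} Y$. A directed mixed graph has at most one edge between two nodes, each edge either directed ($\to$) or bidirected ($\leftrightarrow$). On a path, a non-endpoint node is a collider if both adjacent edges have arrowheads into it. A path between $X$ and $Y$ is blocked by a set $W$ (not containing $X,Y$) if some non-endpoint node on it is either a non-collider belonging to $W$, or a collider such that neither it nor any of its descendants belongs to $W$. $X$ and $Y$ are m-separated by $W$ ($X\perp_{\mathcal{G}} Y\mid W$) if every path between them is blocked by $W$. A maximal ancestral graph (MAG) is a directed mixed graph with no directed cycle, no almost directed cycle ($X\to\cdots\to Z\leftrightarrow X$), and in which every pair of non-adjacent nodes is m-separated by some set of nodes. $P$ satisfies the global Markov property (GMP) w.r.t. a MAG $\mathcal{G}$ if $X\perp_{\mathcal{G}}Y\mid W$ implies $X\perp Y\mid W$ (conditional independence under $P$). A skeleton is an undirected graph; the skeleton of a MAG is obtained by forgetting edge marks. An undirected graph $\mathcal{S}$ on a variable set is a harmonious skeleton w.r.t. a distribution $P$ on those variables if (1) there is a MAG $\mathcal{G}$ with the same adjacencies as $\mathcal{S}$, (2) $P$ satisfies GMP w.r.t. $\mathcal{G}$, and (3) no proper subgraph of $\mathcal{S}$ (obtained by deleting edges) satisfies (1) and (2). *)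

theory Defs
  imports "HOL-Probability.Probability"
begin

text \<open>A directed mixed graph on vertex set V is given by a set D of directed
edges (a,b) meaning a -> b, and a symmetric set B of bidirected edges.\<close>

definition is_dmg :: "'v set \<Rightarrow> ('v \<times> 'v) set \<Rightarrow> ('v \<times> 'v) set \<Rightarrow> bool" where
  "is_dmg V D B \<longleftrightarrow> D \<subseteq> V \<times> V \<and> B \<subseteq> V \<times> V \<and> sym B \<and>
     (\<forall>a. (a,a) \<notin> D \<and> (a,a) \<notin> B) \<and>
     (\<forall>a b. (a,b) \<in> D \<longrightarrow> (b,a) \<notin> D \<and> (a,b) \<notin> B)"

definition adj :: "('v \<times> 'v) set \<Rightarrow> ('v \<times> 'v) set \<Rightarrow> 'v \<Rightarrow> 'v \<Rightarrow> bool" where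
  "adj D B a b \<longleftrightarrow> (a,b) \<in> D \<or> (b,a) \<in> D \<or> (a,b) \<in> B \<or> (b,a) \<in> B"

definition arrow_into :: "('v \<times> 'v) set \<Rightarrow> ('v \<times> 'v) set \<Rightarrow> 'v \<Rightarrow> 'v \<Rightarrow> bool" where
  "arrow_into D B a b \<longleftrightarrow> (a,b) \<in> D \<or> (a,b) \<in> B"

text \<open>A path from a to b: a list of distinct vertices, consecutive ones adjacent
(since there is at most one edge between two nodes, the vertex list determines the path).\<close>
definition is_path :: "('v \<times> 'v) set \<Rightarrow> ('v \<times> 'v) set \<Rightarrow> 'v \<Rightarrow> 'v \<Rightarrow> 'v list \<Rightarrow> bool" where
  "is_path D B a b p \<longleftrightarrow> p \<noteq> [] \<and> hd p = a \<and> last p = b \<and> distinct p \<and>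
     (\<forall>i. Suc i < length p \<longrightarrow> adj D B (p ! i) (p ! Suc i))"

definition collider :: "('v \<times> 'v) set \<Rightarrow> ('v \<times> 'v) set \<Rightarrow> 'v list \<Rightarrow> nat \<Rightarrow> bool" where
  "collider D B p i \<longleftrightarrow>
     arrow_into D B (p ! (i - 1)) (p ! i) \<and> arrow_into D B (p ! (i + 1)) (p ! i)"

text \<open>Descendants of v (including v itself) are the w with (v,w) in D^*.\<close>
definition blocked :: "('v \<times> 'v) set \<Rightarrow> ('v \<times> 'v) set \<Rightarrow> 'v set \<Rightarrow> 'v list \<Rightarrow> bool" where
  "blocked D B W p \<longleftrightarrow> (\<exists>i. 0 < i \<and> Suc i < length p \<and>
     ((\<not> collider D B p i \<and> p ! i \<in> W) \<or>
      (collider D B p i \<and> (\<forall>d. (p ! i, d) \<in> D\<^sup>* \<longrightarrow> d \<notin> W))))"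

definition msep :: "('v \<times> 'v) set \<Rightarrow> ('v \<times> 'v) set \<Rightarrow> 'v \<Rightarrow> 'v \<Rightarrow> 'v set \<Rightarrow> bool" where
  "msep D B a b W \<longleftrightarrow> a \<notin> W \<and> b \<notin> W \<and> (\<forall>p. is_path D B a b p \<longrightarrow> blocked D B W p)"

definition is_MAG :: "'v set \<Rightarrow> ('v \<times> 'v) set \<Rightarrow> ('v \<times> 'v) set \<Rightarrow> bool" where
  "is_MAG V D B \<longleftrightarrow> is_dmg V D B \<and>
     (\<forall>v. (v,v) \<notin> D\<^sup>+) \<and>
     (\<forall>a b. (a,b) \<in> B \<longrightarrow> (a,b) \<notin> D\<^sup>+) \<and>
     (\<forall>a\<in>V. \<forall>b\<in>V. a \<noteq> b \<and> \<not> adj D B a b \<longrightarrow> (\<exists>W\<subseteq>V. msep D B a b W))"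

definition mag_skeleton :: "('v \<times> 'v) set \<Rightarrow> ('v \<times> 'v) set \<Rightarrow> 'v set set" where
  "mag_skeleton D B = {{a,b} | a b. (a,b) \<in> D \<or> (a,b) \<in> B}"

text \<open>The joint distribution on a subset W of variables is the law of
the family (X v) for v in W; marginalisation = restricting to fewer variables.\<close>

definition vals :: "('v \<Rightarrow> 'w \<Rightarrow> 'a) \<Rightarrow> 'v set \<Rightarrow> 'w \<Rightarrow> ('v \<Rightarrow> 'a)" where
  "vals X W \<omega> = restrict (\<lambda>v. X v \<omega>) W"

definition cond_indep :: "'w pmf \<Rightarrow> ('v \<Rightarrow> 'w \<Rightarrow> 'a) \<Rightarrow> 'v \<Rightarrow> 'v \<Rightarrow> 'v set \<Rightarrow> bool" where
  "cond_indep P X a b W \<longleftrightarrow> (\<forall>x y w.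
     measure_pmf.prob P {\<omega>. X a \<omega> = x \<and> X b \<omega> = y \<and> vals X W \<omega> = w} *
       measure_pmf.prob P {\<omega>. vals X W \<omega> = w} =
     measure_pmf.prob P {\<omega>. X a \<omega> = x \<and> vals X W \<omega> = w} *
       measure_pmf.prob P {\<omega>. X b \<omega> = y \<and> vals X W \<omega> = w})"

definition GMP :: "'w pmf \<Rightarrow> ('v \<Rightarrow> 'w \<Rightarrow> 'a) \<Rightarrow> 'v set \<Rightarrow> ('v \<times> 'v) set \<Rightarrow> ('v \<times> 'v) set \<Rightarrow> bool" where
  "GMP P X V D B \<longleftrightarrow> (\<forall>a\<in>V. \<forall>b\<in>V. \<forall>W\<subseteq>V. msep D B a b W \<longrightarrow> cond_indep P X a b W)"

definition FD :: "'w pmf \<Rightarrow> ('v \<Rightarrow> 'w \<Rightarrow> 'a) \<Rightarrow> 'v \<Rightarrow> 'v \<Rightarrow> bool" where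
  "FD P X a b \<longleftrightarrow> (\<exists>f. AE \<omega> in measure_pmf P. X b \<omega> = f (X a \<omega>))"

definition fd_edges :: "'w pmf \<Rightarrow> ('v \<Rightarrow> 'w \<Rightarrow> 'a) \<Rightarrow> 'v set \<Rightarrow> ('v \<times> 'v) set" where
  "fd_edges P X V = {(a,b). a \<in> V \<and> b \<in> V \<and> a \<noteq> b \<and> FD P X a b}"

definition is_ugraph :: "'v set \<Rightarrow> 'v set set \<Rightarrow> bool" where
  "is_ugraph V E \<longleftrightarrow> (\<forall>e\<in>E. \<exists>a b. a \<noteq> b \<and> a \<in> V \<and> b \<in> V \<and> e = {a,b})"

definition compatible_skel :: "'w pmf \<Rightarrow> ('v \<Rightarrow> 'w \<Rightarrow> 'a) \<Rightarrow> 'v set \<Rightarrow> 'v set set \<Rightarrow> bool" where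
  "compatible_skel P X V E \<longleftrightarrow>
     (\<exists>D B. is_MAG V D B \<and> mag_skeleton D B = E \<and> GMP P X V D B)"

definition harmonious :: "'w pmf \<Rightarrow> ('v \<Rightarrow> 'w \<Rightarrow> 'a) \<Rightarrow> 'v set \<Rightarrow> 'v set set \<Rightarrow> bool" where
  "harmonious P X V E \<longleftrightarrow> is_ugraph V E \<and> compatible_skel P X V E \<and>
     \<not> (\<exists>E'. E' \<subset> E \<and> compatible_skel P X V E')"

end

theory Submission
  imports Defs
begin

lemma prob_cong_supp:
  assumes "\<And>\<omega>. \<omega> \<in> set_pmf P \<Longrightarrow> (\<omega> \<in> A \<longleftrightarrow> \<omega> \<in> B)"
  shows "measure_pmf.prob P A = measure_pmf.prob P B"
proof -
  have "A \<inter> set_pmf P = B \<inter> set_pmf P" using assms by blast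
  then show ?thesis by (metis measure_Int_set_pmf)
qed

lemma prob_sum_values:
  "measure_pmf.prob P {\<omega>. \<omega> \<in> E \<and> g \<omega> \<in> A} =
   infsetsum (\<lambda>t. measure_pmf.prob P {\<omega>. \<omega> \<in> E \<and> g \<omega> = t}) A"
proof -
  define Q where "Q = map_pmf (\<lambda>\<omega>. (g \<omega>, \<omega> \<in> E)) P"
  have "measure_pmf.prob P {\<omega>. \<omega> \<in> E \<and> g \<omega> \<in> A} = measure_pmf.prob Q (A \<times> {True})"
    unfolding Q_def by (simp add: vimage_def conj_commute)
  also have "\<dots> = infsetsum (pmf Q) (A \<times> {True})"
    by (rule measure_pmf_conv_infsetsum)
  also have "\<dots> = infsetsum (\<lambda>t. pmf Q (t, True)) A"
    by (rule infsetsum_reindex_bij_betw[symmetric]) (auto simp: bij_betw_def inj_on_def)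
  also have "\<dots> = infsetsum (\<lambda>t. measure_pmf.prob P {\<omega>. \<omega> \<in> E \<and> g \<omega> = t}) A"
    unfolding Q_def pmf_map by (intro infsetsum_cong) (auto simp: vimage_def conj_commute)
  finally show ?thesis .
qed

lemma prob_set_ext:
  assumes "\<And>t. measure_pmf.prob P {\<omega>. \<omega> \<in> Ea \<and> g \<omega> = t} * c1 =
               measure_pmf.prob P {\<omega>. \<omega> \<in> Eb \<and> g \<omega> = t} * c2"
  shows "measure_pmf.prob P {\<omega>. \<omega> \<in> Ea \<and> g \<omega> \<in> A} * c1 =
         measure_pmf.prob P {\<omega>. \<omega> \<in> Eb \<and> g \<omega> \<in> A} * c2"
proof -
  have s: "Infinite_Set_Sum.abs_summable_on (\<lambda>t. measure_pmf.prob P {\<omega>. \<omega> \<in> E \<and> g \<omega> = t}) A" for E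
  proof -
    define Q where "Q = map_pmf (\<lambda>\<omega>. (g \<omega>, \<omega> \<in> E)) P"
    have "Infinite_Set_Sum.abs_summable_on (pmf Q) ((\<lambda>t. (t, True)) ` A)" by auto
    then have "Infinite_Set_Sum.abs_summable_on (\<lambda>t. pmf Q (t, True)) A"
      using abs_summable_on_reindex_iff[of "\<lambda>t. (t, True)" A "pmf Q"] by (auto simp: inj_on_def)
    moreover have "pmf Q (t, True) = measure_pmf.prob P {\<omega>. \<omega> \<in> E \<and> g \<omega> = t}" for t
      unfolding Q_def pmf_map by (auto simp: vimage_def conj_commute intro: arg_cong[where f="measure _"])
    ultimately show ?thesis by simp
  qed
  show ?thesis
    unfolding prob_sum_values
    by (subst (1 2) infsetsum_cmult_left[symmetric]) (auto intro: s assms infsetsum_cong)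
qed

lemma prob_set_ext':
  assumes "\<And>t. measure_pmf.prob P {\<omega>. Q1 \<omega> \<and> g \<omega> = t} * c1 =
               measure_pmf.prob P {\<omega>. Q2 \<omega> \<and> g \<omega> = t} * c2"
  shows "measure_pmf.prob P {\<omega>. Q1 \<omega> \<and> g \<omega> \<in> A} * c1 =
         measure_pmf.prob P {\<omega>. Q2 \<omega> \<and> g \<omega> \<in> A} * c2"
  using prob_set_ext[where Ea="Collect Q1" and Eb="Collect Q2" and P=P and g=g and A=A] assms by simp

lemma prob_mono: "A \<subseteq> B \<Longrightarrow> measure_pmf.prob P A \<le> measure_pmf.prob P B"
  by (rule measure_pmf.finite_measure_mono) auto

lemma prob_mono': "(\<And>\<omega>. Q1 \<omega> \<Longrightarrow> Q2 \<omega>) \<Longrightarrow>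
   measure_pmf.prob P {\<omega>. Q1 \<omega>} \<le> measure_pmf.prob P {\<omega>. Q2 \<omega>}"
  by (rule prob_mono) auto

lemma vals_ext: "vals X W \<omega> \<in> extensional W"
  unfolding vals_def by simp

lemma vals_insert:
  "vals X (insert Z W) \<omega> = w \<longleftrightarrow>
     w \<in> extensional (insert Z W) \<and> vals X W \<omega> = restrict w W \<and> X Z \<omega> = w Z"
proof
  assume h: "vals X (insert Z W) \<omega> = w"
  then have "w \<in> extensional (insert Z W)" using vals_ext by metis
  moreover have "vals X W \<omega> = restrict w W"
    using h unfolding vals_def by (force simp: fun_eq_iff restrict_def)
  moreover have "X Z \<omega> = w Z" using h unfolding vals_def by (force simp: fun_eq_iff restrict_def)
  ultimately show "w \<in> extensional (insert Z W) \<and> vals X W \<omega> = restrict w W \<and> X Z \<omega> = w Z" by blast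
next
  assume h: "w \<in> extensional (insert Z W) \<and> vals X W \<omega> = restrict w W \<and> X Z \<omega> = w Z"
  show "vals X (insert Z W) \<omega> = w"
  proof
    fix v
    show "vals X (insert Z W) \<omega> v = w v"
    proof (cases "v \<in> insert Z W")
      case True
      then show ?thesis using h unfolding vals_def
        by (auto simp: fun_eq_iff restrict_def split: if_splits)
    next
      case False
      then show ?thesis using h unfolding vals_def extensional_def by auto
    qed
  qed
qed

lemma vals_mem: "vals X W \<omega> = w \<Longrightarrow> v \<in> W \<Longrightarrow> X v \<omega> = w v"
  unfolding vals_def by auto

lemma cond_indep_sym: "cond_indep P X a b W \<Longrightarrow> cond_indep P X b a W"
  unfolding cond_indep_def
proof (intro allI)
  fix x y w
  assume h: "\<forall>x y w.
     measure_pmf.prob P {\<omega>. X a \<omega> = x \<and> X b \<omega> = y \<and> vals X W \<omega> = w} *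
       measure_pmf.prob P {\<omega>. vals X W \<omega> = w} =
     measure_pmf.prob P {\<omega>. X a \<omega> = x \<and> vals X W \<omega> = w} *
       measure_pmf.prob P {\<omega>. X b \<omega> = y \<and> vals X W \<omega> = w}"
  have e: "{\<omega>. X b \<omega> = x \<and> X a \<omega> = y \<and> vals X W \<omega> = w} = {\<omega>. X a \<omega> = y \<and> X b \<omega> = x \<and> vals X W \<omega> = w}"
    by auto
  show "measure_pmf.prob P {\<omega>. X b \<omega> = x \<and> X a \<omega> = y \<and> vals X W \<omega> = w} *
       measure_pmf.prob P {\<omega>. vals X W \<omega> = w} =
     measure_pmf.prob P {\<omega>. X b \<omega> = x \<and> vals X W \<omega> = w} *
       measure_pmf.prob P {\<omega>. X a \<omega> = y \<and> vals X W \<omega> = w}"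
    unfolding e using h[rule_format, of y x w] by (simp add: mult.commute)
qed

lemma prob_empty': "(\<And>s. s \<in> set_pmf P \<Longrightarrow> \<not> Q s) \<Longrightarrow> measure_pmf.prob P {s. Q s} = 0"
proof -
  assume "\<And>s. s \<in> set_pmf P \<Longrightarrow> \<not> Q s"
  then have "measure_pmf.prob P {s. Q s} = measure_pmf.prob P {}" by (intro prob_cong_supp) auto
  then show ?thesis by simp
qed

lemma ci_det:
  assumes Fz: "\<forall>s\<in>set_pmf P. X Z s = f (X Xi s)" and xi: "Xi \<in> W"
  shows "cond_indep P X c Z W"
  unfolding cond_indep_def
proof (intro allI)
  fix x y w
  have key: "\<And>s. s \<in> set_pmf P \<Longrightarrow> vals X W s = w \<Longrightarrow> X Z s = f (w Xi)"
    using Fz vals_mem[OF _ xi] by metis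
  show "measure_pmf.prob P {s. X c s = x \<and> X Z s = y \<and> vals X W s = w} * measure_pmf.prob P {s. vals X W s = w} =
        measure_pmf.prob P {s. X c s = x \<and> vals X W s = w} * measure_pmf.prob P {s. X Z s = y \<and> vals X W s = w}"
  proof (cases "f (w Xi) = y")
    case True
    have 1: "measure_pmf.prob P {s. X c s = x \<and> X Z s = y \<and> vals X W s = w} = measure_pmf.prob P {s. X c s = x \<and> vals X W s = w}"
      by (rule prob_cong_supp) (use key True in auto)
    have 2: "measure_pmf.prob P {s. X Z s = y \<and> vals X W s = w} = measure_pmf.prob P {s. vals X W s = w}"
      by (rule prob_cong_supp) (use key True in auto)
    show ?thesis by (simp add: 1 2)
  next
    case False
    have 1: "measure_pmf.prob P {s. X c s = x \<and> X Z s = y \<and> vals X W s = w} = 0"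
      by (rule prob_empty') (use key False in auto)
    have 2: "measure_pmf.prob P {s. X Z s = y \<and> vals X W s = w} = 0"
      by (rule prob_empty') (use key False in auto)
    show ?thesis by (simp add: 1 2)
  qed
qed

lemma ci_transfer:
  assumes h: "\<And>w. \<exists>w' c. \<forall>s\<in>set_pmf P. (vals X W s = w) \<longleftrightarrow> (c \<and> vals X W2 s = w')"
    and ci: "cond_indep P X a b W2"
  shows "cond_indep P X a b W"
  unfolding cond_indep_def
proof (intro allI)
  fix x y w
  obtain w' c where hw: "\<forall>s\<in>set_pmf P. (vals X W s = w) \<longleftrightarrow> (c \<and> vals X W2 s = w')"
    using h[of w] by blast
  show "measure_pmf.prob P {s. X a s = x \<and> X b s = y \<and> vals X W s = w} * measure_pmf.prob P {s. vals X W s = w} =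
        measure_pmf.prob P {s. X a s = x \<and> vals X W s = w} * measure_pmf.prob P {s. X b s = y \<and> vals X W s = w}"
  proof (cases c)
    case True
    have 1: "measure_pmf.prob P {s. X a s = x \<and> X b s = y \<and> vals X W s = w} = measure_pmf.prob P {s. X a s = x \<and> X b s = y \<and> vals X W2 s = w'}"
      using hw True by (intro prob_cong_supp) simp
    have 2: "measure_pmf.prob P {s. vals X W s = w} = measure_pmf.prob P {s. vals X W2 s = w'}"
      using hw True by (intro prob_cong_supp) simp
    have 3: "measure_pmf.prob P {s. X a s = x \<and> vals X W s = w} = measure_pmf.prob P {s. X a s = x \<and> vals X W2 s = w'}"
      using hw True by (intro prob_cong_supp) simp
    have 4: "measure_pmf.prob P {s. X b s = y \<and> vals X W s = w} = measure_pmf.prob P {s. X b s = y \<and> vals X W2 s = w'}"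
      using hw True by (intro prob_cong_supp) simp
    show ?thesis unfolding 1 2 3 4 using ci[unfolded cond_indep_def, rule_format, of x y w'] .
  next
    case False
    have 2: "measure_pmf.prob P {s. vals X W s = w} = 0"
      using hw False by (intro prob_empty') simp
    have 3: "measure_pmf.prob P {s. X a s = x \<and> vals X W s = w} = 0"
      using hw False by (intro prob_empty') simp
    show ?thesis by (simp add: 2 3)
  qed
qed

lemma ci_addZ_det:
  assumes Fz: "\<forall>s\<in>set_pmf P. X Z s = f (X Xi s)" and xi: "Xi \<in> W"
    and ci: "cond_indep P X a b W"
  shows "cond_indep P X a b (insert Z W)"
proof (rule ci_transfer[OF _ ci])
  fix w
  show "\<exists>w' c. \<forall>s\<in>set_pmf P. (vals X (insert Z W) s = w) \<longleftrightarrow> (c \<and> vals X W s = w')"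
  proof (intro exI ballI)
    fix s assume s: "s \<in> set_pmf P"
    show "(vals X (insert Z W) s = w) \<longleftrightarrow>
      ((w \<in> extensional (insert Z W) \<and> w Z = f (w Xi)) \<and> vals X W s = restrict w W)"
      unfolding vals_insert using Fz s vals_mem[of X W s "restrict w W" Xi] xi by auto
  qed
qed


lemma alg1:
  fixes p0 qx qxb qb QA QBA :: real
  assumes "0 \<le> qx" "qx \<le> p0" "0 \<le> qxb" "qxb \<le> qx" "qxb * p0 = qx * qb" "QBA * p0 = QA * qb"
  shows "qxb * QA = qx * QBA"
proof (cases "p0 = 0")
  case True
  then have "qx = 0" "qxb = 0" using assms by linarith+
  then show ?thesis by simp
next
  case False
  have "p0 * (qxb * QA) = (qxb * p0) * QA" by (simp add: ac_simps)
  also have "\<dots> = qx * (QA * qb)" using assms by (simp add: ac_simps)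
  also have "\<dots> = qx * (QBA * p0)" using assms by simp
  also have "\<dots> = p0 * (qx * QBA)" by (simp add: ac_simps)
  finally show ?thesis using False by simp
qed

lemma alg2:
  fixes u v r qb ra p0 :: real
  assumes "u * v = r * qb" "r * p0 = v * ra" "0 \<le> u" "u \<le> v" "0 \<le> qb" "qb \<le> v"
  shows "u * p0 = qb * ra"
proof (cases "v = 0")
  case True
  then have "u = 0" "qb = 0" using assms by linarith+
  then show ?thesis by simp
next
  case False
  have "v * (u * p0) = (u * v) * p0" by (simp add: ac_simps)
  also have "\<dots> = qb * (r * p0)" using assms by (simp add: ac_simps)
  also have "\<dots> = v * (qb * ra)" using assms by (simp add: ac_simps)
  finally show ?thesis using False by simp
qed

lemma alg3:
  fixes G p0 p pa pb ra :: real
  assumes "0 \<le> G" "G \<le> p0" "0 \<le> pa" "pa \<le> p0" "G * p0 = pb * ra" "pa * p0 = p * ra"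
  shows "G * p = pa * pb"
proof (cases "p0 = 0")
  case True
  then have "G = 0" "pa = 0" using assms by linarith+
  then show ?thesis by simp
next
  case False
  have "p0 * (G * p) = (G * p0) * p" by (simp add: ac_simps)
  also have "\<dots> = pb * (p * ra)" using assms by (simp add: ac_simps)
  also have "\<dots> = p0 * (pa * pb)" using assms by (simp add: ac_simps)
  finally show ?thesis using False by simp
qed

lemma prob_nonneg: "0 \<le> measure_pmf.prob P A" by simp

lemma ci_replace:
  assumes Fz: "\<forall>s\<in>set_pmf P. X Z s = f (X Xi s)"
    and ci: "cond_indep P X c Xi W"
  shows "cond_indep P X c Z W"
  unfolding cond_indep_def
proof (intro allI)
  fix x y w
  define A where "A = f -` {y}"
  have e1: "measure_pmf.prob P {s. X c s = x \<and> X Z s = y \<and> vals X W s = w} = measure_pmf.prob P {s. (X c s = x \<and> vals X W s = w) \<and> X Xi s \<in> A}"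
    by (rule prob_cong_supp) (use Fz in \<open>auto simp: A_def\<close>)
  have e2: "measure_pmf.prob P {s. X Z s = y \<and> vals X W s = w} = measure_pmf.prob P {s. vals X W s = w \<and> X Xi s \<in> A}"
    by (rule prob_cong_supp) (use Fz in \<open>auto simp: A_def\<close>)
  have "measure_pmf.prob P {s. (X c s = x \<and> vals X W s = w) \<and> X Xi s \<in> A} * measure_pmf.prob P {s. vals X W s = w} =
        measure_pmf.prob P {s. vals X W s = w \<and> X Xi s \<in> A} * measure_pmf.prob P {s. X c s = x \<and> vals X W s = w}"
  proof (rule prob_set_ext')
    fix t
    have "measure_pmf.prob P {s. X c s = x \<and> X Xi s = t \<and> vals X W s = w} * measure_pmf.prob P {s. vals X W s = w} =
          measure_pmf.prob P {s. X c s = x \<and> vals X W s = w} * measure_pmf.prob P {s. X Xi s = t \<and> vals X W s = w}"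
      using ci unfolding cond_indep_def by blast
    moreover have "measure_pmf.prob P {s. (X c s = x \<and> vals X W s = w) \<and> X Xi s = t} = measure_pmf.prob P {s. X c s = x \<and> X Xi s = t \<and> vals X W s = w}"
      by (intro arg_cong[where f="measure_pmf.prob P"]) auto
    moreover have "measure_pmf.prob P {s. vals X W s = w \<and> X Xi s = t} = measure_pmf.prob P {s. X Xi s = t \<and> vals X W s = w}"
      by (intro arg_cong[where f="measure_pmf.prob P"]) auto
    ultimately show "measure_pmf.prob P {s. (X c s = x \<and> vals X W s = w) \<and> X Xi s = t} * measure_pmf.prob P {s. vals X W s = w} =
          measure_pmf.prob P {s. vals X W s = w \<and> X Xi s = t} * measure_pmf.prob P {s. X c s = x \<and> vals X W s = w}"
      by (simp add: ac_simps)
  qed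
  then show "measure_pmf.prob P {s. X c s = x \<and> X Z s = y \<and> vals X W s = w} * measure_pmf.prob P {s. vals X W s = w} =
        measure_pmf.prob P {s. X c s = x \<and> vals X W s = w} * measure_pmf.prob P {s. X Z s = y \<and> vals X W s = w}"
    unfolding e1 e2 by (simp add: ac_simps)
qed

lemma ci_nonext:
  assumes "w \<notin> extensional W"
  shows "measure_pmf.prob P {s. X a s = x \<and> X b s = y \<and> vals X W s = w} * measure_pmf.prob P {s. vals X W s = w} =
        measure_pmf.prob P {s. X a s = x \<and> vals X W s = w} * measure_pmf.prob P {s. X b s = y \<and> vals X W s = w}"
proof -
  have "\<And>s. vals X W s \<noteq> w" using vals_ext assms by metis
  then show ?thesis by simp
qed

lemma ci_Xi_addZ:
  assumes Fz: "\<forall>s\<in>set_pmf P. X Z s = f (X Xi s)"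
    and ci: "cond_indep P X Xi b W"
  shows "cond_indep P X Xi b (insert Z W)"
  unfolding cond_indep_def
proof (intro allI)
  fix x y w
  show "measure_pmf.prob P {s. X Xi s = x \<and> X b s = y \<and> vals X (insert Z W) s = w} * measure_pmf.prob P {s. vals X (insert Z W) s = w} =
        measure_pmf.prob P {s. X Xi s = x \<and> vals X (insert Z W) s = w} * measure_pmf.prob P {s. X b s = y \<and> vals X (insert Z W) s = w}"
  proof (cases "w \<in> extensional (insert Z W)")
    case False
    then show ?thesis by (rule ci_nonext)
  next
    case True
    define w' where "w' = restrict w W"
    define A where "A = f -` {w Z}"
    have V: "\<And>s. s \<in> set_pmf P \<Longrightarrow> vals X (insert Z W) s = w \<longleftrightarrow> vals X W s = w' \<and> X Xi s \<in> A"
      unfolding vals_insert w'_def A_def using True Fz by auto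
    have e0: "measure_pmf.prob P {s. vals X (insert Z W) s = w} = measure_pmf.prob P {s. vals X W s = w' \<and> X Xi s \<in> A}"
      by (rule prob_cong_supp) (use V in auto)
    have eb: "measure_pmf.prob P {s. X b s = y \<and> vals X (insert Z W) s = w} = measure_pmf.prob P {s. (X b s = y \<and> vals X W s = w') \<and> X Xi s \<in> A}"
      by (rule prob_cong_supp) (use V in auto)
    have ext: "measure_pmf.prob P {s. (X b s = y \<and> vals X W s = w') \<and> X Xi s \<in> A} * measure_pmf.prob P {s. vals X W s = w'} =
        measure_pmf.prob P {s. vals X W s = w' \<and> X Xi s \<in> A} * measure_pmf.prob P {s. X b s = y \<and> vals X W s = w'}"
    proof (rule prob_set_ext')
      fix t
      have "measure_pmf.prob P {s. X Xi s = t \<and> X b s = y \<and> vals X W s = w'} * measure_pmf.prob P {s. vals X W s = w'} =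
            measure_pmf.prob P {s. X Xi s = t \<and> vals X W s = w'} * measure_pmf.prob P {s. X b s = y \<and> vals X W s = w'}"
        using ci unfolding cond_indep_def by blast
      moreover have "measure_pmf.prob P {s. (X b s = y \<and> vals X W s = w') \<and> X Xi s = t} = measure_pmf.prob P {s. X Xi s = t \<and> X b s = y \<and> vals X W s = w'}"
        by (intro arg_cong[where f="measure_pmf.prob P"]) auto
      moreover have "measure_pmf.prob P {s. vals X W s = w' \<and> X Xi s = t} = measure_pmf.prob P {s. X Xi s = t \<and> vals X W s = w'}"
        by (intro arg_cong[where f="measure_pmf.prob P"]) auto
      ultimately show "measure_pmf.prob P {s. (X b s = y \<and> vals X W s = w') \<and> X Xi s = t} * measure_pmf.prob P {s. vals X W s = w'} =
          measure_pmf.prob P {s. vals X W s = w' \<and> X Xi s = t} * measure_pmf.prob P {s. X b s = y \<and> vals X W s = w'}"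
        by (simp add: ac_simps)
    qed
    show ?thesis
    proof (cases "x \<in> A")
      case False
      have 1: "measure_pmf.prob P {s. X Xi s = x \<and> X b s = y \<and> vals X (insert Z W) s = w} = 0"
        by (rule prob_empty') (use V False in auto)
      have 2: "measure_pmf.prob P {s. X Xi s = x \<and> vals X (insert Z W) s = w} = 0"
        by (rule prob_empty') (use V False in auto)
      show ?thesis by (simp add: 1 2)
    next
      case xA: True
      have 1: "measure_pmf.prob P {s. X Xi s = x \<and> X b s = y \<and> vals X (insert Z W) s = w} = measure_pmf.prob P {s. X Xi s = x \<and> X b s = y \<and> vals X W s = w'}"
        by (rule prob_cong_supp) (use V xA in auto)
      have 2: "measure_pmf.prob P {s. X Xi s = x \<and> vals X (insert Z W) s = w} = measure_pmf.prob P {s. X Xi s = x \<and> vals X W s = w'}"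
        by (rule prob_cong_supp) (use V xA in auto)
      have c: "measure_pmf.prob P {s. X Xi s = x \<and> X b s = y \<and> vals X W s = w'} * measure_pmf.prob P {s. vals X W s = w'} =
            measure_pmf.prob P {s. X Xi s = x \<and> vals X W s = w'} * measure_pmf.prob P {s. X b s = y \<and> vals X W s = w'}"
        using ci unfolding cond_indep_def by blast
      show ?thesis unfolding 1 2 e0 eb
      proof (rule alg1[OF prob_nonneg _ prob_nonneg _ c])
        show "measure_pmf.prob P {s. X Xi s = x \<and> vals X W s = w'} \<le> measure_pmf.prob P {s. vals X W s = w'}"
          by (rule prob_mono') auto
        show "measure_pmf.prob P {s. X Xi s = x \<and> X b s = y \<and> vals X W s = w'} \<le> measure_pmf.prob P {s. X Xi s = x \<and> vals X W s = w'}"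
          by (rule prob_mono') auto
        show "measure_pmf.prob P {s. (X b s = y \<and> vals X W s = w') \<and> X Xi s \<in> A} * measure_pmf.prob P {s. vals X W s = w'} =
              measure_pmf.prob P {s. vals X W s = w' \<and> X Xi s \<in> A} * measure_pmf.prob P {s. X b s = y \<and> vals X W s = w'}"
          by (rule ext)
      qed
    qed
  qed
qed

lemma ci_contract:
  assumes Fz: "\<forall>s\<in>set_pmf P. X Z s = f (X Xi s)"
    and xiW: "Xi \<notin> W"
    and ci1: "cond_indep P X a Xi W"
    and ci2: "cond_indep P X a b (insert Xi W)"
  shows "cond_indep P X a b (insert Z W)"
  unfolding cond_indep_def
proof (intro allI)
  fix x y w
  show "measure_pmf.prob P {s. X a s = x \<and> X b s = y \<and> vals X (insert Z W) s = w} * measure_pmf.prob P {s. vals X (insert Z W) s = w} =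
        measure_pmf.prob P {s. X a s = x \<and> vals X (insert Z W) s = w} * measure_pmf.prob P {s. X b s = y \<and> vals X (insert Z W) s = w}"
  proof (cases "w \<in> extensional (insert Z W)")
    case False
    then show ?thesis by (rule ci_nonext)
  next
    case True
    define w' where "w' = restrict w W"
    define A where "A = f -` {w Z}"
    have V: "\<And>s. s \<in> set_pmf P \<Longrightarrow> vals X (insert Z W) s = w \<longleftrightarrow> vals X W s = w' \<and> X Xi s \<in> A"
      unfolding vals_insert w'_def A_def using True Fz by auto
    have VXi: "vals X (insert Xi W) s = w'(Xi := t) \<longleftrightarrow> vals X W s = w' \<and> X Xi s = t" for s t
    proof -
      have "w'(Xi := t) \<in> extensional (insert Xi W)" unfolding w'_def extensional_def by auto
      moreover have "restrict (w'(Xi := t)) W = w'"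
        unfolding w'_def using xiW by (auto simp: fun_eq_iff)
      ultimately show ?thesis unfolding vals_insert by simp
    qed
    have eG: "measure_pmf.prob P {s. X a s = x \<and> X b s = y \<and> vals X (insert Z W) s = w} = measure_pmf.prob P {s. (X a s = x \<and> X b s = y \<and> vals X W s = w') \<and> X Xi s \<in> A}"
      by (rule prob_cong_supp) (use V in auto)
    have e0: "measure_pmf.prob P {s. vals X (insert Z W) s = w} = measure_pmf.prob P {s. vals X W s = w' \<and> X Xi s \<in> A}"
      by (rule prob_cong_supp) (use V in auto)
    have ea: "measure_pmf.prob P {s. X a s = x \<and> vals X (insert Z W) s = w} = measure_pmf.prob P {s. (X a s = x \<and> vals X W s = w') \<and> X Xi s \<in> A}"
      by (rule prob_cong_supp) (use V in auto)
    have eb: "measure_pmf.prob P {s. X b s = y \<and> vals X (insert Z W) s = w} = measure_pmf.prob P {s. (X b s = y \<and> vals X W s = w') \<and> X Xi s \<in> A}"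
      by (rule prob_cong_supp) (use V in auto)
    have i: "measure_pmf.prob P {s. (X a s = x \<and> vals X W s = w') \<and> X Xi s = t} * measure_pmf.prob P {s. vals X W s = w'} =
             measure_pmf.prob P {s. vals X W s = w' \<and> X Xi s = t} * measure_pmf.prob P {s. X a s = x \<and> vals X W s = w'}" for t
    proof -
      have "measure_pmf.prob P {s. X a s = x \<and> X Xi s = t \<and> vals X W s = w'} * measure_pmf.prob P {s. vals X W s = w'} =
            measure_pmf.prob P {s. X a s = x \<and> vals X W s = w'} * measure_pmf.prob P {s. X Xi s = t \<and> vals X W s = w'}"
        using ci1 unfolding cond_indep_def by blast
      moreover have "measure_pmf.prob P {s. (X a s = x \<and> vals X W s = w') \<and> X Xi s = t} = measure_pmf.prob P {s. X a s = x \<and> X Xi s = t \<and> vals X W s = w'}"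
        by (intro arg_cong[where f="measure_pmf.prob P"]) auto
      moreover have "measure_pmf.prob P {s. vals X W s = w' \<and> X Xi s = t} = measure_pmf.prob P {s. X Xi s = t \<and> vals X W s = w'}"
        by (intro arg_cong[where f="measure_pmf.prob P"]) auto
      ultimately show ?thesis by (simp add: ac_simps)
    qed
    have iii: "measure_pmf.prob P {s. (X a s = x \<and> X b s = y \<and> vals X W s = w') \<and> X Xi s = t} * measure_pmf.prob P {s. vals X W s = w'} =
             measure_pmf.prob P {s. (X b s = y \<and> vals X W s = w') \<and> X Xi s = t} * measure_pmf.prob P {s. X a s = x \<and> vals X W s = w'}" for t
    proof -
      have c2: "measure_pmf.prob P {s. X a s = x \<and> X b s = y \<and> vals X (insert Xi W) s = w'(Xi := t)} * measure_pmf.prob P {s. vals X (insert Xi W) s = w'(Xi := t)} =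
            measure_pmf.prob P {s. X a s = x \<and> vals X (insert Xi W) s = w'(Xi := t)} * measure_pmf.prob P {s. X b s = y \<and> vals X (insert Xi W) s = w'(Xi := t)}"
        using ci2 unfolding cond_indep_def by blast
      have r1: "measure_pmf.prob P {s. X a s = x \<and> X b s = y \<and> vals X (insert Xi W) s = w'(Xi := t)} =
                measure_pmf.prob P {s. (X a s = x \<and> X b s = y \<and> vals X W s = w') \<and> X Xi s = t}"
        unfolding VXi by (intro arg_cong[where f="measure_pmf.prob P"]) auto
      have r2: "measure_pmf.prob P {s. vals X (insert Xi W) s = w'(Xi := t)} = measure_pmf.prob P {s. vals X W s = w' \<and> X Xi s = t}"
        unfolding VXi by simp
      have r3: "measure_pmf.prob P {s. X a s = x \<and> vals X (insert Xi W) s = w'(Xi := t)} =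
                measure_pmf.prob P {s. (X a s = x \<and> vals X W s = w') \<and> X Xi s = t}"
        unfolding VXi by (intro arg_cong[where f="measure_pmf.prob P"]) auto
      have r4: "measure_pmf.prob P {s. X b s = y \<and> vals X (insert Xi W) s = w'(Xi := t)} =
                measure_pmf.prob P {s. (X b s = y \<and> vals X W s = w') \<and> X Xi s = t}"
        unfolding VXi by (intro arg_cong[where f="measure_pmf.prob P"]) auto
      show ?thesis
      proof (rule alg2[OF c2[unfolded r1 r2 r3 r4] i prob_nonneg _ prob_nonneg])
        show "measure_pmf.prob P {s. (X a s = x \<and> X b s = y \<and> vals X W s = w') \<and> X Xi s = t} \<le> measure_pmf.prob P {s. vals X W s = w' \<and> X Xi s = t}"
          by (rule prob_mono') auto
        show "measure_pmf.prob P {s. (X b s = y \<and> vals X W s = w') \<and> X Xi s = t} \<le> measure_pmf.prob P {s. vals X W s = w' \<and> X Xi s = t}"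
          by (rule prob_mono') auto
      qed
    qed
    have E3: "measure_pmf.prob P {s. (X a s = x \<and> X b s = y \<and> vals X W s = w') \<and> X Xi s \<in> A} * measure_pmf.prob P {s. vals X W s = w'} =
             measure_pmf.prob P {s. (X b s = y \<and> vals X W s = w') \<and> X Xi s \<in> A} * measure_pmf.prob P {s. X a s = x \<and> vals X W s = w'}"
      by (rule prob_set_ext') (rule iii)
    have E1: "measure_pmf.prob P {s. (X a s = x \<and> vals X W s = w') \<and> X Xi s \<in> A} * measure_pmf.prob P {s. vals X W s = w'} =
             measure_pmf.prob P {s. vals X W s = w' \<and> X Xi s \<in> A} * measure_pmf.prob P {s. X a s = x \<and> vals X W s = w'}"
      by (rule prob_set_ext') (rule i)
    show ?thesis unfolding eG e0 ea eb
    proof (rule alg3[OF prob_nonneg _ prob_nonneg _ E3 E1])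
      show "measure_pmf.prob P {s. (X a s = x \<and> X b s = y \<and> vals X W s = w') \<and> X Xi s \<in> A} \<le> measure_pmf.prob P {s. vals X W s = w'}"
        by (rule prob_mono') auto
      show "measure_pmf.prob P {s. (X a s = x \<and> vals X W s = w') \<and> X Xi s \<in> A} \<le> measure_pmf.prob P {s. vals X W s = w'}"
        by (rule prob_mono') auto
    qed
  qed
qed

definition col :: "('v \<times> 'v) set \<Rightarrow> ('v \<times> 'v) set \<Rightarrow> 'v \<Rightarrow> 'v \<Rightarrow> 'v \<Rightarrow> bool" where
  "col D B x y z \<longleftrightarrow> arrow_into D B x y \<and> arrow_into D B z y"

definition open3 :: "('v \<times> 'v) set \<Rightarrow> ('v \<times> 'v) set \<Rightarrow> 'v set \<Rightarrow> 'v \<Rightarrow> 'v \<Rightarrow> 'v \<Rightarrow> bool" where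
  "open3 D B W x y z \<longleftrightarrow> (col D B x y z \<longrightarrow> (\<exists>d. (y, d) \<in> D\<^sup>* \<and> d \<in> W)) \<and> (\<not> col D B x y z \<longrightarrow> y \<notin> W)"

lemma open3_sym: "open3 D B W x y z \<longleftrightarrow> open3 D B W z y x"
  unfolding open3_def col_def by blast

lemma not_blocked_iff:
  "\<not> blocked D B W p \<longleftrightarrow> (\<forall>i. 0 < i \<and> Suc i < length p \<longrightarrow> open3 D B W (p ! (i - 1)) (p ! i) (p ! Suc i))"
  unfolding blocked_def open3_def col_def collider_def by auto

lemma msep_iff:
  "msep D B a b W \<longleftrightarrow> a \<notin> W \<and> b \<notin> W \<and> \<not> (\<exists>p. is_path D B a b p \<and> \<not> blocked D B W p)"
  unfolding msep_def by blast

lemma adj_sym: "adj D B x y \<Longrightarrow> adj D B y x"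
  unfolding adj_def by blast

lemma adj_in: "adj D B x y \<Longrightarrow> D \<subseteq> V \<times> V \<Longrightarrow> B \<subseteq> V \<times> V \<Longrightarrow> x \<in> V \<and> y \<in> V"
  unfolding adj_def by blast

lemma path_in:
  assumes "is_path D B a b p" "D \<subseteq> V \<times> V" "B \<subseteq> V \<times> V" "a \<in> V"
  shows "set p \<subseteq> V"
proof
  fix x assume "x \<in> set p"
  then obtain j where j: "j < length p" "p ! j = x" by (auto simp: in_set_conv_nth)
  show "x \<in> V"
  proof (cases j)
    case 0
    then show ?thesis using assms j by (cases p) (auto simp: is_path_def)
  next
    case (Suc i)
    then have "adj D B (p ! i) (p ! j)" using assms(1) j unfolding is_path_def by auto
    then show ?thesis using adj_in[OF _ assms(2,3)] j by blast
  qed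
qed

lemma path_rev:
  assumes "is_path D B a b p"
  shows "is_path D B b a (rev p)"
  unfolding is_path_def
proof (intro conjI allI impI)
  show "rev p \<noteq> []" using assms by (simp add: is_path_def)
  show "hd (rev p) = b" using assms by (simp add: is_path_def hd_rev)
  show "last (rev p) = a" using assms by (simp add: is_path_def last_rev)
  show "distinct (rev p)" using assms by (simp add: is_path_def)
  fix i assume i: "Suc i < length (rev p)"
  define n where "n = length p"
  have "adj D B (p ! (n - Suc (Suc i))) (p ! Suc (n - Suc (Suc i)))"
    using assms i unfolding is_path_def n_def by auto
  moreover have "Suc (n - Suc (Suc i)) = n - Suc i" using i n_def by auto
  ultimately show "adj D B (rev p ! i) (rev p ! Suc i)"
    using i by (auto simp: rev_nth n_def intro: adj_sym)
qed

lemma not_blocked_rev: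
  assumes "\<not> blocked D B W p"
  shows "\<not> blocked D B W (rev p)"
  unfolding not_blocked_iff
proof (intro allI impI)
  fix i assume i: "0 < i \<and> Suc i < length (rev p)"
  define n where "n = length p"
  define j where "j = n - Suc i"
  have j: "0 < j" "Suc j < length p" using i by (auto simp: j_def n_def)
  have "open3 D B W (p ! (j - 1)) (p ! j) (p ! Suc j)"
    using assms j unfolding not_blocked_iff by blast
  moreover have "rev p ! (i - 1) = p ! Suc j" using i by (auto simp: rev_nth j_def n_def Suc_diff_Suc)
  moreover have "rev p ! i = p ! j" using i by (auto simp: rev_nth j_def n_def)
  moreover have "rev p ! Suc i = p ! (j - 1)" using i by (auto simp: rev_nth j_def n_def)
  ultimately show "open3 D B W (rev p ! (i - 1)) (rev p ! i) (rev p ! Suc i)"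
    using open3_sym by metis
qed

lemma msep_sym: "msep D B a b W \<Longrightarrow> msep D B b a W"
  unfolding msep_iff using path_rev not_blocked_rev by (metis rev_rev_ident)

lemma msep_refl_false: "\<not> msep D B a a W"
proof -
  have "is_path D B a a [a]" unfolding is_path_def by auto
  moreover have "\<not> blocked D B W [a]" unfolding blocked_def by auto
  ultimately show ?thesis unfolding msep_def by blast
qed

lemma adj_edge_path:
  assumes "adj D B a b" "a \<noteq> b"
  shows "\<not> msep D B a b W"
proof -
  have "is_path D B a b [a, b]" unfolding is_path_def using assms
    by (auto simp: nth_Cons split: nat.splits)
  moreover have "\<not> blocked D B W [a, b]" unfolding blocked_def by auto
  ultimately show ?thesis unfolding msep_def by blast
qed

lemma chain:
  assumes path: "is_path D B a b p" and nb: "\<not> blocked D B W p" and symB: "sym B"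
  shows "0 < j \<Longrightarrow> j < length p \<Longrightarrow> arrow_into D B (p ! (j - 1)) (p ! j) \<Longrightarrow>
         \<exists>d. (p ! j, d) \<in> D\<^sup>* \<and> (d \<in> W \<or> d = last p)"
proof (induction "length p - j" arbitrary: j rule: less_induct)
  case less
  show ?case
  proof (cases "Suc j = length p")
    case True
    then have "p ! j = last p" using path unfolding is_path_def by (metis diff_Suc_1 last_conv_nth)
    then show ?thesis by auto
  next
    case False
    then have sj: "Suc j < length p" using less.prems by auto
    have o: "open3 D B W (p ! (j - 1)) (p ! j) (p ! Suc j)"
      using nb less.prems sj unfolding not_blocked_iff by blast
    show ?thesis
    proof (cases "col D B (p ! (j - 1)) (p ! j) (p ! Suc j)")
      case True
      then show ?thesis using o unfolding open3_def by blast
    next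
      case False
      then have na: "\<not> arrow_into D B (p ! Suc j) (p ! j)"
        using less.prems unfolding col_def by blast
      have "adj D B (p ! j) (p ! Suc j)" using path sj unfolding is_path_def by blast
      then have e: "(p ! j, p ! Suc j) \<in> D"
        using na symB unfolding adj_def arrow_into_def sym_def by blast
      then have "arrow_into D B (p ! (Suc j - 1)) (p ! Suc j)" unfolding arrow_into_def by simp
      then obtain d where d: "(p ! Suc j, d) \<in> D\<^sup>*" "d \<in> W \<or> d = last p"
        using less.hyps[of "Suc j"] less.prems sj by (metis diff_less_mono2 lessI zero_less_Suc)
      have "(p ! j, d) \<in> D\<^sup>*" using e d(1) by (rule converse_rtrancl_into_rtrancl)
      then show ?thesis using d(2) by blast
    qed
  qed
qed

locale extg =
  fixes D1 B1 :: "('v \<times> 'v) set" and U :: "'v set" and Z Xi :: 'v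
  assumes D1U: "D1 \<subseteq> U \<times> U" and B1U: "B1 \<subseteq> U \<times> U" and ZU: "Z \<notin> U" and XiU: "Xi \<in> U"
    and symB1: "sym B1"
begin

abbreviation "DD \<equiv> insert (Xi, Z) D1"

lemma XiZ: "Xi \<noteq> Z" using XiU ZU by blast

lemma adj1_DD: "adj D1 B1 x y \<Longrightarrow> adj DD B1 x y"
  unfolding adj_def by auto

lemma adjDD: "adj DD B1 x y \<longleftrightarrow> adj D1 B1 x y \<or> (x = Xi \<and> y = Z) \<or> (x = Z \<and> y = Xi)"
  unfolding adj_def by auto

lemma adjZ: "adj DD B1 x Z \<Longrightarrow> x = Xi"
  using D1U B1U ZU unfolding adj_def by auto

lemma adj1_in: "adj D1 B1 x y \<Longrightarrow> x \<in> U \<and> y \<in> U"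
  using adj_in[OF _ D1U B1U] by blast

lemma arrDD: "y \<noteq> Z \<Longrightarrow> arrow_into DD B1 x y \<longleftrightarrow> arrow_into D1 B1 x y"
  unfolding arrow_into_def by auto

lemma colDD: "y \<noteq> Z \<Longrightarrow> col DD B1 x y z \<longleftrightarrow> col D1 B1 x y z"
  unfolding col_def using arrDD by blast

lemma arr_Z_Xi: "\<not> arrow_into DD B1 Z Xi"
  using D1U B1U ZU XiZ unfolding arrow_into_def by auto

lemma rt1: "(u, d) \<in> D1\<^sup>* \<Longrightarrow> (u, d) \<in> DD\<^sup>*"
  using rtrancl_mono[of D1 DD] by blast

lemma rtDD: "(u, d) \<in> DD\<^sup>* \<Longrightarrow> (u, d) \<in> D1\<^sup>* \<or> ((u, Xi) \<in> D1\<^sup>* \<and> d = Z)"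
proof (induction rule: rtrancl_induct)
  case base
  then show ?case by simp
next
  case (step y d)
  show ?case
  proof (cases "(y, d) = (Xi, Z)")
    case True
    then show ?thesis using step XiZ by auto
  next
    case False
    then have "(y, d) \<in> D1" using step by auto
    moreover then have "y \<noteq> Z" using D1U ZU by auto
    ultimately show ?thesis using step by (meson rtrancl.rtrancl_into_rtrancl)
  qed
qed

lemma tDD: "(u, d) \<in> DD\<^sup>+ \<Longrightarrow> (u, d) \<in> D1\<^sup>+ \<or> d = Z"
proof (induction rule: trancl_induct)
  case (base y)
  then show ?case by auto
next
  case (step y d)
  show ?case
  proof (cases "(y, d) = (Xi, Z)")
    case True
    then show ?thesis by auto
  next
    case False
    then have "(y, d) \<in> D1" using step by auto
    moreover then have "y \<noteq> Z" using D1U ZU by auto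
    ultimately show ?thesis using step by (meson trancl_into_trancl)
  qed
qed

lemma path1_DD: "is_path D1 B1 a b p \<Longrightarrow> is_path DD B1 a b p"
  unfolding is_path_def using adj1_DD by simp

lemma path1_in: "is_path D1 B1 a b p \<Longrightarrow> a \<in> U \<Longrightarrow> set p \<subseteq> U"
  using path_in[OF _ D1U B1U] by simp

lemma path_noZ:
  assumes p: "is_path DD B1 a b p" and "a \<noteq> Z" "b \<noteq> Z"
  shows "Z \<notin> set p"
proof
  assume "Z \<in> set p"
  then obtain i where i: "i < length p" "p ! i = Z" by (auto simp: in_set_conv_nth)
  have ne: "p \<noteq> []" and hd: "hd p = a" and lst: "last p = b" and dist: "distinct p"
    and ad: "\<And>j. Suc j < length p \<Longrightarrow> adj DD B1 (p ! j) (p ! Suc j)"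
    using p unfolding is_path_def by auto
  have "i \<noteq> 0" using hd ne i assms(2) by (metis hd_conv_nth)
  moreover have "Suc i \<noteq> length p" using lst ne i assms(3) by (metis diff_Suc_1 last_conv_nth)
  ultimately have i2: "0 < i" "Suc i < length p" using i by auto
  obtain k where k: "i = Suc k" using i2 by (cases i) auto
  have "adj DD B1 (p ! k) (p ! i)" using ad[of k] k i2 by simp
  then have 1: "p ! k = Xi" using i adjZ by auto
  have "adj DD B1 (p ! i) (p ! Suc i)" using ad[of i] i2 by simp
  then have "adj DD B1 (p ! Suc i) (p ! i)" by (rule adj_sym)
  then have 2: "p ! Suc i = Xi" using i adjZ by auto
  have "p ! k \<noteq> p ! Suc i"
    using dist i2 k by (simp add: nth_eq_iff_index_eq)
  then show False using 1 2 by simp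
qed

lemma pathDD_1:
  assumes p: "is_path DD B1 a b p" and "a \<noteq> Z" "b \<noteq> Z"
  shows "is_path D1 B1 a b p"
proof -
  have nz: "Z \<notin> set p" by (rule path_noZ[OF assms])
  show ?thesis unfolding is_path_def
  proof (intro conjI allI impI)
    fix i assume i: "Suc i < length p"
    have "adj DD B1 (p ! i) (p ! Suc i)" using p i unfolding is_path_def by blast
    moreover have "p ! i \<noteq> Z" "p ! Suc i \<noteq> Z" using nz i by (auto dest: nth_mem)
    ultimately show "adj D1 B1 (p ! i) (p ! Suc i)" using adjDD by blast
  qed (use p in \<open>auto simp: is_path_def\<close>)
qed

lemma open_mono:
  assumes o: "open3 D1 B1 W1 x y z" and "y \<in> U" and W: "W1 \<subseteq> W" "W \<subseteq> insert Z W1"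
  shows "open3 DD B1 W x y z"
proof -
  have yz: "y \<noteq> Z" using assms ZU by auto
  show ?thesis unfolding open3_def colDD[OF yz]
  proof (intro conjI impI)
    assume "col D1 B1 x y z"
    then obtain d where "(y, d) \<in> D1\<^sup>*" "d \<in> W1" using o unfolding open3_def by blast
    then show "\<exists>d. (y, d) \<in> DD\<^sup>* \<and> d \<in> W" using rt1 W by blast
  next
    assume "\<not> col D1 B1 x y z"
    then have "y \<notin> W1" using o unfolding open3_def by blast
    then show "y \<notin> W" using yz W by blast
  qed
qed

lemma open_Xi:
  assumes o: "open3 D1 B1 (insert Xi (W - {Z})) x y z" and "y \<in> U" and ZW: "Z \<in> W"
  shows "open3 DD B1 W x y z"
proof -
  have yz: "y \<noteq> Z" using assms ZU by auto
  show ?thesis unfolding open3_def colDD[OF yz]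
  proof (intro conjI impI)
    assume "col D1 B1 x y z"
    then obtain d where d: "(y, d) \<in> D1\<^sup>*" "d \<in> insert Xi (W - {Z})" using o unfolding open3_def by blast
    show "\<exists>d. (y, d) \<in> DD\<^sup>* \<and> d \<in> W"
    proof (cases "d = Xi")
      case True
      have "(y, Xi) \<in> DD\<^sup>*" using rt1 d True by blast
      then have "(y, Z) \<in> DD\<^sup>*" by (simp add: rtrancl.rtrancl_into_rtrancl)
      then show ?thesis using ZW by blast
    next
      case False
      then show ?thesis using d rt1 by blast
    qed
  next
    assume "\<not> col D1 B1 x y z"
    then have "y \<notin> insert Xi (W - {Z})" using o unfolding open3_def by blast
    then show "y \<notin> W" using yz by blast
  qed
qed

lemma open_back:
  assumes o: "open3 DD B1 W x y z" and "y \<in> U" and ZW: "Z \<notin> W"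
  shows "open3 D1 B1 W x y z"
proof -
  have yz: "y \<noteq> Z" using assms ZU by auto
  show ?thesis unfolding open3_def
  proof (intro conjI impI)
    assume "col D1 B1 x y z"
    then obtain d where d: "(y, d) \<in> DD\<^sup>*" "d \<in> W" using o colDD[OF yz] unfolding open3_def by blast
    then have "d \<noteq> Z" using ZW by blast
    then show "\<exists>d. (y, d) \<in> D1\<^sup>* \<and> d \<in> W" using rtDD[OF d(1)] d(2) by blast
  next
    assume "\<not> col D1 B1 x y z"
    then show "y \<notin> W" using o colDD[OF yz] unfolding open3_def by blast
  qed
qed

end

context extg begin

lemma lift_nb:
  assumes p: "is_path D1 B1 a b p" and a: "a \<in> U" and nb: "\<not> blocked D1 B1 W1 p"
    and h: "\<And>x y z. y \<in> U \<Longrightarrow> open3 D1 B1 W1 x y z \<Longrightarrow> open3 DD B1 W x y z"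
  shows "\<not> blocked DD B1 W p"
  unfolding not_blocked_iff
proof (intro allI impI)
  fix i assume i: "0 < i \<and> Suc i < length p"
  have "p ! i \<in> U" using path1_in[OF p a] i by (meson Suc_lessD nth_mem subsetD)
  moreover have "open3 D1 B1 W1 (p ! (i - 1)) (p ! i) (p ! Suc i)" using nb i unfolding not_blocked_iff by blast
  ultimately show "open3 DD B1 W (p ! (i - 1)) (p ! i) (p ! Suc i)" using h by blast
qed

lemma L1:
  assumes m: "msep DD B1 a b W" and a: "a \<in> U"
  shows "msep D1 B1 a b (W - {Z})"
  unfolding msep_iff
proof (intro conjI notI)
  show "a \<in> W - {Z} \<Longrightarrow> False" "b \<in> W - {Z} \<Longrightarrow> False" using m unfolding msep_def by auto
  assume "\<exists>p. is_path D1 B1 a b p \<and> \<not> blocked D1 B1 (W - {Z}) p"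
  then obtain p where p: "is_path D1 B1 a b p" "\<not> blocked D1 B1 (W - {Z}) p" by blast
  have "\<not> blocked DD B1 W p"
    by (rule lift_nb[OF p(1) a p(2)]) (rule open_mono, auto)
  then show False using m path1_DD[OF p(1)] unfolding msep_def by blast
qed

lemma L2:
  assumes m: "msep DD B1 a b W" and a: "a \<in> U" and ZW: "Z \<in> W" and ab: "a \<noteq> Xi" "b \<noteq> Xi"
  shows "msep D1 B1 a b (insert Xi (W - {Z}))"
  unfolding msep_iff
proof (intro conjI notI)
  show "a \<in> insert Xi (W - {Z}) \<Longrightarrow> False" "b \<in> insert Xi (W - {Z}) \<Longrightarrow> False"
    using m ab unfolding msep_def by auto
  assume "\<exists>p. is_path D1 B1 a b p \<and> \<not> blocked D1 B1 (insert Xi (W - {Z})) p"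
  then obtain p where p: "is_path D1 B1 a b p" "\<not> blocked D1 B1 (insert Xi (W - {Z})) p" by blast
  have "\<not> blocked DD B1 W p"
    by (rule lift_nb[OF p(1) a p(2)]) (rule open_Xi, auto simp: ZW)
  then show False using m path1_DD[OF p(1)] unfolding msep_def by blast
qed

lemma L4:
  assumes m: "msep DD B1 c Z W" and c: "c \<in> U" and XiW: "Xi \<notin> W"
  shows "msep D1 B1 c Xi W"
  unfolding msep_iff
proof (intro conjI notI)
  show "c \<in> W \<Longrightarrow> False" using m unfolding msep_def by auto
  show "Xi \<in> W \<Longrightarrow> False" using XiW by auto
  have ZW: "Z \<notin> W" using m unfolding msep_def by auto
  assume "\<exists>p. is_path D1 B1 c Xi p \<and> \<not> blocked D1 B1 W p"
  then obtain p where p: "is_path D1 B1 c Xi p" "\<not> blocked D1 B1 W p" by blast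
  have pU: "set p \<subseteq> U" using path1_in[OF p(1) c] .
  have ne: "p \<noteq> []" and hd: "hd p = c" and lst: "last p = Xi" and dist: "distinct p"
    and ad: "\<And>j. Suc j < length p \<Longrightarrow> adj D1 B1 (p ! j) (p ! Suc j)"
    using p(1) unfolding is_path_def by auto
  define q where "q = p @ [Z]"
  have qn: "\<And>i. i < length p \<Longrightarrow> q ! i = p ! i" unfolding q_def by (simp add: nth_append)
  have qZ: "q ! length p = Z" unfolding q_def by simp
  have pl: "p ! (length p - 1) = Xi" using ne lst by (simp add: last_conv_nth)
  have "is_path DD B1 c Z q" unfolding is_path_def
  proof (intro conjI allI impI)
    show "q \<noteq> []" "last q = Z" unfolding q_def by auto
    show "hd q = c" unfolding q_def using ne hd by simp
    show "distinct q" unfolding q_def using dist pU ZU by auto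
    fix i assume i: "Suc i < length q"
    show "adj DD B1 (q ! i) (q ! Suc i)"
    proof (cases "Suc i < length p")
      case True
      then show ?thesis using ad[OF True] qn adj1_DD by simp
    next
      case False
      then have "Suc i = length p" using i unfolding q_def by simp
      then have "q ! i = Xi" "q ! Suc i = Z" using qn pl qZ by (metis diff_Suc_1 lessI)+
      then show ?thesis unfolding adj_def by simp
    qed
  qed
  moreover have "\<not> blocked DD B1 W q" unfolding not_blocked_iff
  proof (intro allI impI)
    fix i assume i: "0 < i \<and> Suc i < length q"
    show "open3 DD B1 W (q ! (i - 1)) (q ! i) (q ! Suc i)"
    proof (cases "Suc i < length p")
      case True
      have "open3 D1 B1 W (p ! (i - 1)) (p ! i) (p ! Suc i)" using p(2) i True unfolding not_blocked_iff by blast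
      moreover have "p ! i \<in> U" using pU True by (meson Suc_lessD nth_mem subsetD)
      ultimately have "open3 DD B1 W (p ! (i - 1)) (p ! i) (p ! Suc i)" by (rule open_mono) auto
      then show ?thesis using qn True by simp
    next
      case False
      then have "Suc i = length p" using i unfolding q_def by simp
      then have "q ! i = Xi" "q ! Suc i = Z" using qn pl qZ by (metis diff_Suc_1 lessI)+
      then show ?thesis unfolding open3_def col_def using arr_Z_Xi XiW by simp
    qed
  qed
  ultimately show False using m unfolding msep_def by blast
qed

end

context extg begin

lemma L3:
  assumes m: "msep DD B1 a b W" and a: "a \<in> U" and b: "b \<in> U" and ZW: "Z \<in> W" and XiW: "Xi \<notin> W"
  shows "msep D1 B1 a Xi (W - {Z}) \<or> msep D1 B1 b Xi (W - {Z})"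
proof (rule ccontr)
  define W1 where "W1 = W - {Z}"
  assume "\<not> ?thesis"
  moreover have "a \<notin> W1" "b \<notin> W1" "Xi \<notin> W1" using m XiW unfolding msep_def W1_def by auto
  ultimately obtain p1 p2 where p1: "is_path D1 B1 a Xi p1" "\<not> blocked D1 B1 W1 p1"
    and p2: "is_path D1 B1 b Xi p2" "\<not> blocked D1 B1 W1 p2"
    unfolding msep_iff W1_def by blast
  have p1U: "set p1 \<subseteq> U" using path1_in[OF p1(1) a] .
  have p2U: "set p2 \<subseteq> U" using path1_in[OF p2(1) b] .
  have ne1: "p1 \<noteq> []" and hd1: "hd p1 = a" and lst1: "last p1 = Xi" and dist1: "distinct p1"
    and ad1: "\<And>j. Suc j < length p1 \<Longrightarrow> adj D1 B1 (p1 ! j) (p1 ! Suc j)"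
    using p1(1) unfolding is_path_def by auto
  have ne2: "p2 \<noteq> []" and hd2: "hd p2 = b" and lst2: "last p2 = Xi" and dist2: "distinct p2"
    and ad2: "\<And>j. Suc j < length p2 \<Longrightarrow> adj D1 B1 (p2 ! j) (p2 ! Suc j)"
    using p2(1) unfolding is_path_def by auto
  define n1 where "n1 = length p1"
  define n2 where "n2 = length p2"
  have n1: "0 < n1" "p1 ! (n1 - 1) = Xi" "p1 ! 0 = a" using ne1 lst1 hd1 unfolding n1_def
    by (auto simp: last_conv_nth hd_conv_nth)
  have n2: "0 < n2" "p2 ! (n2 - 1) = Xi" "p2 ! 0 = b" using ne2 lst2 hd2 unfolding n2_def
    by (auto simp: last_conv_nth hd_conv_nth)
  have xi2: "p1 ! (n1 - 1) \<in> set p2" using last_in_set[OF ne2] lst2 n1 by simp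
  then have ex: "\<exists>k. p1 ! k \<in> set p2" by blast
  define k where "k = (LEAST k. p1 ! k \<in> set p2)"
  have k_in: "p1 ! k \<in> set p2" unfolding k_def by (rule LeastI_ex[OF ex])
  have k_min: "\<And>j. j < k \<Longrightarrow> p1 ! j \<notin> set p2" unfolding k_def using not_less_Least by blast
  have k_le: "k \<le> n1 - 1"
    unfolding k_def by (rule Least_le) (rule xi2)
  then have k_lt: "k < n1" using n1 by auto
  define v where "v = p1 ! k"
  obtain m where m_lt: "m < n2" and m_v: "p2 ! m = v" using k_in unfolding v_def n2_def by (auto simp: in_set_conv_nth)
  define r where "r = take (Suc k) p1 @ rev (take m p2)"
  have len_r: "length r = Suc k + m" unfolding r_def using k_lt m_lt n1_def n2_def by simp
  have r_lo: "\<And>i. i \<le> k \<Longrightarrow> r ! i = p1 ! i"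
    unfolding r_def using k_lt n1_def by (simp add: nth_append)
  have r_hi: "\<And>i. k \<le> i \<Longrightarrow> i < Suc k + m \<Longrightarrow> r ! i = p2 ! (k + m - i)"
  proof -
    fix i assume i: "k \<le> i" "i < Suc k + m"
    show "r ! i = p2 ! (k + m - i)"
    proof (cases "i = k")
      case True
      then show ?thesis using r_lo m_v v_def by simp
    next
      case False
      then have "Suc k \<le> i" using i by simp
      have L: "length (take (Suc k) p1) = Suc k" using k_lt n1_def by simp
      have "r ! i = rev (take m p2) ! (i - Suc k)" unfolding r_def using L \<open>Suc k \<le> i\<close>
        by (simp add: nth_append)
      also have "\<dots> = take m p2 ! (m - Suc (i - Suc k))" using i \<open>Suc k \<le> i\<close> m_lt n2_def
        by (simp add: rev_nth)
      also have "\<dots> = p2 ! (m - Suc (i - Suc k))" using i \<open>Suc k \<le> i\<close> by simp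
      also have "m - Suc (i - Suc k) = k + m - i" using i \<open>Suc k \<le> i\<close> by simp
      finally show ?thesis .
    qed
  qed
  have vU: "v \<in> U" using p1U k_lt v_def n1_def by (meson nth_mem subsetD)
  have p1nU: "\<And>i. i < n1 \<Longrightarrow> p1 ! i \<in> U" using p1U n1_def by (meson nth_mem subsetD)
  have p2nU: "\<And>i. i < n2 \<Longrightarrow> p2 ! i \<in> U" using p2U n2_def by (meson nth_mem subsetD)
  have rpath: "is_path DD B1 a b r"
    unfolding is_path_def
  proof (intro conjI allI impI)
    show "r \<noteq> []" using len_r by auto
    have "r \<noteq> []" using len_r by auto
    then show "hd r = a" using r_lo[of 0] n1 by (simp add: hd_conv_nth)
    have "r \<noteq> []" using len_r by auto
    then show "last r = b" using r_hi[of "k + m"] n2 len_r by (simp add: last_conv_nth)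
    show "distinct r" unfolding r_def distinct_append
    proof (intro conjI)
      show "distinct (take (Suc k) p1)" using dist1 by simp
      show "distinct (rev (take m p2))" using dist2 by simp
      show "set (take (Suc k) p1) \<inter> set (rev (take m p2)) = {}"
      proof (rule ccontr)
        assume "\<not> ?thesis"
        then obtain x where x1: "x \<in> set (take (Suc k) p1)" and x2: "x \<in> set (take m p2)" by auto
        obtain i where i: "i < Suc k" "p1 ! i = x" using x1 k_lt n1_def by (auto simp: in_set_conv_nth)
        obtain j where j: "j < m" "p2 ! j = x" using x2 m_lt n2_def by (auto simp: in_set_conv_nth)
        have "x \<in> set p2" using j m_lt n2_def by (auto intro: nth_mem)
        show False
        proof (cases "i < k")
          case True
          then show False using k_min i \<open>x \<in> set p2\<close> by blast
        next
          case False
          then have "i = k" using i by simp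
          then have "x = v" using i v_def by simp
          then have "p2 ! j = p2 ! m" using j m_v by simp
          then show False using dist2 j m_lt n2_def by (simp add: nth_eq_iff_index_eq)
        qed
      qed
    qed
    fix i assume i: "Suc i < length r"
    show "adj DD B1 (r ! i) (r ! Suc i)"
    proof (cases "i < k")
      case True
      then show ?thesis using r_lo[of i] r_lo[of "Suc i"] ad1[of i] k_lt n1_def adj1_DD by simp
    next
      case False
      define j where "j = k + m - Suc i"
      have j: "Suc j < n2" "r ! i = p2 ! Suc j" "r ! Suc i = p2 ! j"
        using False i len_r r_hi[of i] r_hi[of "Suc i"] m_lt unfolding j_def
        by (auto simp: Suc_diff_Suc)
      have "adj D1 B1 (p2 ! j) (p2 ! Suc j)" using ad2 j n2_def by simp
      then have "adj D1 B1 (p2 ! Suc j) (p2 ! j)" by (rule adj_sym)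
      then show ?thesis using j adj1_DD by simp
    qed
  qed
  have "\<not> blocked DD B1 W r" unfolding not_blocked_iff
  proof (intro allI impI)
    fix i assume i: "0 < i \<and> Suc i < length r"
    show "open3 DD B1 W (r ! (i - 1)) (r ! i) (r ! Suc i)"
    proof (cases "i < k")
      case True
      have "open3 D1 B1 W1 (p1 ! (i - 1)) (p1 ! i) (p1 ! Suc i)"
        using p1(2) i True k_lt n1_def unfolding not_blocked_iff by auto
      then have "open3 DD B1 W (p1 ! (i - 1)) (p1 ! i) (p1 ! Suc i)"
        by (rule open_mono) (use p1nU True k_lt W1_def in auto)
      then show ?thesis using r_lo True by simp
    next
      case False
      show ?thesis
      proof (cases "i = k")
        case False
        define j where "j = k + m - i"
        have ik: "k < i" using False \<open>\<not> i < k\<close> by simp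
        have im: "Suc i < Suc k + m" using i len_r by simp
        have j: "0 < j" "Suc j < n2" using ik im m_lt unfolding j_def by auto
        have e: "k + m - (i - 1) = Suc j" using ik im unfolding j_def by simp
        have "r ! (i - 1) = p2 ! (k + m - (i - 1))" using r_hi[of "i - 1"] ik im by simp
        then have j1: "r ! (i - 1) = p2 ! Suc j" using e by simp
        have j2: "r ! i = p2 ! j" using r_hi[of i] ik im unfolding j_def by simp
        have e3: "k + m - Suc i = j - 1" unfolding j_def by simp
        have "r ! Suc i = p2 ! (k + m - Suc i)" using r_hi[of "Suc i"] ik im by simp
        then have j3: "r ! Suc i = p2 ! (j - 1)" using e3 by simp
        have "open3 D1 B1 W1 (p2 ! (j - 1)) (p2 ! j) (p2 ! Suc j)"
          using p2(2) j n2_def unfolding not_blocked_iff by auto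
        then have "open3 D1 B1 W1 (p2 ! Suc j) (p2 ! j) (p2 ! (j - 1))" by (rule open3_sym[THEN iffD1])
        then have "open3 DD B1 W (p2 ! Suc j) (p2 ! j) (p2 ! (j - 1))"
          by (rule open_mono) (use p2nU j W1_def in auto)
        then show ?thesis using j1 j2 j3 by simp
      next
        case True
        have k0: "0 < k" and m0: "0 < m" using i True len_r by auto
        define x where "x = p1 ! (k - 1)"
        define z where "z = p2 ! (m - 1)"
        have rx: "r ! (i - 1) = x" using r_lo True x_def by simp
        have rv: "r ! i = v" using r_lo True v_def by simp
        have rz: "r ! Suc i = z" using r_hi[of "Suc i"] True m0 z_def by simp
        have vZ: "v \<noteq> Z" using vU ZU by auto
        have "open3 DD B1 W x v z" unfolding open3_def colDD[OF vZ]
        proof (intro conjI impI)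
          assume c: "col D1 B1 x v z"
          then have "arrow_into D1 B1 (p1 ! (k - 1)) (p1 ! k)" unfolding col_def x_def v_def by simp
          then obtain d where d: "(p1 ! k, d) \<in> D1\<^sup>*" "d \<in> W1 \<or> d = last p1"
            using chain[OF p1(1) p1(2) symB1, of k] k0 k_lt n1_def by blast
          show "\<exists>d. (v, d) \<in> DD\<^sup>* \<and> d \<in> W"
          proof (cases "d \<in> W1")
            case True
            then show ?thesis using d rt1 W1_def v_def by blast
          next
            case False
            then have "d = Xi" using d lst1 by simp
            then have "(v, Xi) \<in> DD\<^sup>*" using d rt1 v_def by blast
            then have "(v, Z) \<in> DD\<^sup>*" by (simp add: rtrancl.rtrancl_into_rtrancl)
            then show ?thesis using ZW by blast
          qed
        next
          assume nc: "\<not> col D1 B1 x v z"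
          have "v \<notin> W1"
          proof (cases "arrow_into D1 B1 x v")
            case False
            show ?thesis
            proof (cases "Suc k < n1")
              case True
              have "open3 D1 B1 W1 (p1 ! (k - 1)) (p1 ! k) (p1 ! Suc k)"
                using p1(2) k0 True n1_def unfolding not_blocked_iff by auto
              then show ?thesis using False unfolding open3_def col_def x_def v_def by blast
            next
              case False
              then have "k = n1 - 1" using k_lt by simp
              then have "v = Xi" using n1 v_def by simp
              then show ?thesis using XiW W1_def by auto
            qed
          next
            case True
            then have nz: "\<not> arrow_into D1 B1 z v" using nc unfolding col_def by blast
            show ?thesis
            proof (cases "Suc m < n2")
              case True
              have "open3 D1 B1 W1 (p2 ! (m - 1)) (p2 ! m) (p2 ! Suc m)"
                using p2(2) m0 True n2_def unfolding not_blocked_iff by auto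
              moreover have "\<not> col D1 B1 (p2 ! (m - 1)) (p2 ! m) (p2 ! Suc m)"
                using nz m_v unfolding col_def z_def by simp
              ultimately show ?thesis using m_v unfolding open3_def by simp
            next
              case False
              then have "m = n2 - 1" using m_lt by simp
              then have "v = Xi" using n2 m_v by simp
              then show ?thesis using XiW W1_def by auto
            qed
          qed
          then show "v \<notin> W" using vZ W1_def by auto
        qed
        then show ?thesis using rx rv rz by simp
      qed
    qed
  qed
  then show False using m rpath unfolding msep_def by blast
qed

end

lemma path_noZ_gen:
  assumes p: "is_path D B a b p" and "a \<noteq> Z" "b \<noteq> Z" and H: "\<And>x. adj D B x Z \<Longrightarrow> x = Xi"
  shows "Z \<notin> set p"
proof
  assume "Z \<in> set p"
  then obtain i where i: "i < length p" "p ! i = Z" by (auto simp: in_set_conv_nth)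
  have ne: "p \<noteq> []" and hd: "hd p = a" and lst: "last p = b" and dist: "distinct p"
    and ad: "\<And>j. Suc j < length p \<Longrightarrow> adj D B (p ! j) (p ! Suc j)"
    using p unfolding is_path_def by auto
  have "i \<noteq> 0" using hd ne i assms(2) by (metis hd_conv_nth)
  moreover have "Suc i \<noteq> length p" using lst ne i assms(3) by (metis diff_Suc_1 last_conv_nth)
  ultimately have i2: "0 < i" "Suc i < length p" using i by auto
  obtain k where k: "i = Suc k" using i2 by (cases i) auto
  have "adj D B (p ! k) (p ! i)" using ad[of k] k i2 by simp
  then have 1: "p ! k = Xi" using i H by auto
  have "adj D B (p ! i) (p ! Suc i)" using ad[of i] i2 by simp
  then have "adj D B (p ! Suc i) (p ! i)" by (rule adj_sym)
  then have 2: "p ! Suc i = Xi" using i H by auto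
  have "p ! k \<noteq> p ! Suc i"
    using dist i2 k by (simp add: nth_eq_iff_index_eq)
  then show False using 1 2 by simp
qed

locale restr =
  fixes D B :: "('v \<times> 'v) set" and V :: "'v set" and Z Xi :: 'v
  assumes dmg: "is_dmg V D B" and ZV: "Z \<in> V"
    and H: "\<And>x. adj D B x Z \<Longrightarrow> x = Xi"
begin

abbreviation "U \<equiv> V - {Z}"
abbreviation "DR \<equiv> D \<inter> (U \<times> U)"
abbreviation "BR \<equiv> B \<inter> (U \<times> U)"

lemma DV: "D \<subseteq> V \<times> V" and BV: "B \<subseteq> V \<times> V" and symB: "sym B"
  using dmg unfolding is_dmg_def by auto

lemma HZ: "(x, Z) \<in> D \<Longrightarrow> x = Xi" "(Z, x) \<in> D \<Longrightarrow> x = Xi"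
  using H unfolding adj_def by auto

lemma rtR_aux:
  assumes "(u, y) \<in> D\<^sup>*" "u \<noteq> Z"
  shows "(y \<noteq> Z \<longrightarrow> (u, y) \<in> DR\<^sup>*) \<and> (y = Z \<longrightarrow> (u, Xi) \<in> DR\<^sup>* \<and> (Xi, Z) \<in> D)"
  using assms(1)
proof (induction rule: rtrancl_induct)
  case base
  then show ?case using assms(2) by simp
next
  case (step y d)
  have yd: "y \<in> V" "d \<in> V" using step DV by auto
  show ?case
  proof (cases "y = Z")
    case True
    then have "d = Xi" using step HZ by auto
    moreover have "(Xi, Z) \<in> D" using step True by auto
    ultimately show ?thesis using step True dmg unfolding is_dmg_def by auto
  next
    case False
    note yZ = False
    show ?thesis
    proof (cases "d = Z")
      case True
      then have "y = Xi" using step HZ by auto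
      then show ?thesis using step True yZ by auto
    next
      case False
      then have "(y, d) \<in> DR" using step yd yZ by auto
      then show ?thesis using step yZ False by (meson rtrancl.rtrancl_into_rtrancl)
    qed
  qed
qed

lemma rtR: "(u, d) \<in> D\<^sup>* \<Longrightarrow> u \<noteq> Z \<Longrightarrow> d \<noteq> Z \<Longrightarrow> (u, d) \<in> DR\<^sup>*"
  using rtR_aux by blast

lemma adjR: "x \<in> U \<Longrightarrow> y \<in> U \<Longrightarrow> adj DR BR x y \<longleftrightarrow> adj D B x y"
  unfolding adj_def by auto

lemma arrR: "x \<in> U \<Longrightarrow> y \<in> U \<Longrightarrow> arrow_into DR BR x y \<longleftrightarrow> arrow_into D B x y"
  unfolding arrow_into_def by auto

lemma colR: "x \<in> U \<Longrightarrow> y \<in> U \<Longrightarrow> z \<in> U \<Longrightarrow> col DR BR x y z \<longleftrightarrow> col D B x y z"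
  unfolding col_def using arrR by blast

lemma pathR: "is_path DR BR a b p \<Longrightarrow> is_path D B a b p"
  unfolding is_path_def adj_def by blast

lemma pathR_in: "is_path DR BR a b p \<Longrightarrow> a \<in> U \<Longrightarrow> set p \<subseteq> U"
  by (rule path_in) auto

lemma path_back:
  assumes p: "is_path D B a b p" and a: "a \<in> U" and b: "b \<in> U"
  shows "is_path DR BR a b p"
proof -
  have nz: "Z \<notin> set p" by (rule path_noZ_gen[OF p _ _ H]) (use a b in auto)
  have pv: "set p \<subseteq> V" by (rule path_in[OF p DV BV]) (use a in auto)
  have pu: "set p \<subseteq> U" using nz pv by auto
  show ?thesis unfolding is_path_def
  proof (intro conjI allI impI)
    fix i assume i: "Suc i < length p"
    have "adj D B (p ! i) (p ! Suc i)" using p i unfolding is_path_def by blast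
    moreover have "p ! i \<in> set p" "p ! Suc i \<in> set p" using i by simp_all
    then have "p ! i \<in> U" "p ! Suc i \<in> U" using pu by blast+
    ultimately show "adj DR BR (p ! i) (p ! Suc i)" using adjR by blast
  qed (use p in \<open>auto simp: is_path_def\<close>)
qed

lemma nb_up:
  assumes p: "is_path DR BR a b p" and a: "a \<in> U" and nb: "\<not> blocked DR BR (W - {Z}) p"
  shows "\<not> blocked D B W p"
  unfolding not_blocked_iff
proof (intro allI impI)
  fix i assume i: "0 < i \<and> Suc i < length p"
  have pu: "set p \<subseteq> U" by (rule pathR_in[OF p a])
  have l: "i - 1 < length p" "i < length p" "Suc i < length p" using i by auto
  have "p ! (i - 1) \<in> set p" "p ! i \<in> set p" "p ! Suc i \<in> set p" using l by (simp_all only: nth_mem)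
  then have u: "p ! (i - 1) \<in> U" "p ! i \<in> U" "p ! Suc i \<in> U" using pu by blast+
  have o: "open3 DR BR (W - {Z}) (p ! (i - 1)) (p ! i) (p ! Suc i)" using nb i unfolding not_blocked_iff by blast
  show "open3 D B W (p ! (i - 1)) (p ! i) (p ! Suc i)" unfolding open3_def
  proof (intro conjI impI)
    assume "col D B (p ! (i - 1)) (p ! i) (p ! Suc i)"
    then have "col DR BR (p ! (i - 1)) (p ! i) (p ! Suc i)" using colR u by blast
    then obtain d where "(p ! i, d) \<in> DR\<^sup>*" "d \<in> W - {Z}" using o unfolding open3_def by blast
    moreover have "DR\<^sup>* \<subseteq> D\<^sup>*" by (rule rtrancl_mono) auto
    ultimately show "\<exists>d. (p ! i, d) \<in> D\<^sup>* \<and> d \<in> W" by blast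
  next
    assume "\<not> col D B (p ! (i - 1)) (p ! i) (p ! Suc i)"
    then have "\<not> col DR BR (p ! (i - 1)) (p ! i) (p ! Suc i)" using colR u by blast
    then have "p ! i \<notin> W - {Z}" using o unfolding open3_def by blast
    then show "p ! i \<notin> W" using u by auto
  qed
qed

lemma nb_down:
  assumes p: "is_path DR BR a b p" and a: "a \<in> U" and nb: "\<not> blocked D B W p" and W: "Z \<notin> W"
  shows "\<not> blocked DR BR W p"
  unfolding not_blocked_iff
proof (intro allI impI)
  fix i assume i: "0 < i \<and> Suc i < length p"
  have pu: "set p \<subseteq> U" by (rule pathR_in[OF p a])
  have l: "i - 1 < length p" "i < length p" "Suc i < length p" using i by auto
  have "p ! (i - 1) \<in> set p" "p ! i \<in> set p" "p ! Suc i \<in> set p" using l by (simp_all only: nth_mem)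
  then have u: "p ! (i - 1) \<in> U" "p ! i \<in> U" "p ! Suc i \<in> U" using pu by blast+
  have o: "open3 D B W (p ! (i - 1)) (p ! i) (p ! Suc i)" using nb i unfolding not_blocked_iff by blast
  show "open3 DR BR W (p ! (i - 1)) (p ! i) (p ! Suc i)" unfolding open3_def
  proof (intro conjI impI)
    assume "col DR BR (p ! (i - 1)) (p ! i) (p ! Suc i)"
    then have "col D B (p ! (i - 1)) (p ! i) (p ! Suc i)" using colR u by blast
    then obtain d where d: "(p ! i, d) \<in> D\<^sup>*" "d \<in> W" using o unfolding open3_def by blast
    have "(p ! i, d) \<in> DR\<^sup>*" by (rule rtR[OF d(1)]) (use u d W in auto)
    then show "\<exists>d. (p ! i, d) \<in> DR\<^sup>* \<and> d \<in> W" using d by blast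
  next
    assume "\<not> col DR BR (p ! (i - 1)) (p ! i) (p ! Suc i)"
    then have "\<not> col D B (p ! (i - 1)) (p ! i) (p ! Suc i)" using colR u by blast
    then show "p ! i \<notin> W" using o unfolding open3_def by blast
  qed
qed

lemma msep_down:
  assumes m: "msep D B a b W" and a: "a \<in> U"
  shows "msep DR BR a b (W - {Z})"
  unfolding msep_iff
proof (intro conjI notI)
  show "a \<in> W - {Z} \<Longrightarrow> False" "b \<in> W - {Z} \<Longrightarrow> False" using m unfolding msep_def by auto
  assume "\<exists>p. is_path DR BR a b p \<and> \<not> blocked DR BR (W - {Z}) p"
  then obtain p where p: "is_path DR BR a b p" "\<not> blocked DR BR (W - {Z}) p" by blast
  have "\<not> blocked D B W p" by (rule nb_up[OF p(1) a p(2)])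
  then show False using m pathR[OF p(1)] unfolding msep_def by blast
qed

lemma msep_up:
  assumes m: "msep DR BR a b W" and a: "a \<in> U" and b: "b \<in> U" and W: "W \<subseteq> U"
  shows "msep D B a b W"
  unfolding msep_iff
proof (intro conjI notI)
  show "a \<in> W \<Longrightarrow> False" "b \<in> W \<Longrightarrow> False" using m unfolding msep_def by auto
  assume "\<exists>p. is_path D B a b p \<and> \<not> blocked D B W p"
  then obtain p where p: "is_path D B a b p" "\<not> blocked D B W p" by blast
  have pr: "is_path DR BR a b p" by (rule path_back[OF p(1) a b])
  have "\<not> blocked DR BR W p" by (rule nb_down[OF pr a p(2)]) (use W in auto)
  then show False using m pr unfolding msep_def by blast
qed

lemma MAG_restr:
  assumes M: "is_MAG V D B"
  shows "is_MAG U DR BR"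
proof -
  have d1: "\<And>a. (a, a) \<notin> D \<and> (a, a) \<notin> B" and d2: "\<And>a b. (a, b) \<in> D \<Longrightarrow> (b, a) \<notin> D \<and> (a, b) \<notin> B"
    using dmg unfolding is_dmg_def by blast+
  have s: "sym BR"
  proof (rule symI)
    fix a b assume "(a, b) \<in> BR"
    then show "(b, a) \<in> BR" using symB unfolding sym_def by blast
  qed
  have dm: "is_dmg U DR BR" unfolding is_dmg_def
  proof (intro conjI allI impI)
    show "DR \<subseteq> U \<times> U" "BR \<subseteq> U \<times> U" by blast+
    show "sym BR" by (rule s)
  next
    fix a show "(a, a) \<notin> DR" "(a, a) \<notin> BR" using d1[of a] by blast+
  next
    fix a b assume "(a, b) \<in> DR" then show "(b, a) \<notin> DR" "(a, b) \<notin> BR" using d2[of a b] by blast+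
  qed
  have tr: "\<And>x. x \<in> DR\<^sup>+ \<Longrightarrow> x \<in> D\<^sup>+" by (erule trancl_mono) simp
  have ac: "\<And>v. (v, v) \<notin> D\<^sup>+" using M unfolding is_MAG_def by simp
  have an: "\<And>a b. (a, b) \<in> B \<Longrightarrow> (a, b) \<notin> D\<^sup>+" using M unfolding is_MAG_def by simp
  have mx: "\<And>a b. a \<in> V \<Longrightarrow> b \<in> V \<Longrightarrow> a \<noteq> b \<Longrightarrow> \<not> adj D B a b \<Longrightarrow> \<exists>W\<subseteq>V. msep D B a b W"
    using M unfolding is_MAG_def by simp
  have ac': "\<forall>v. (v, v) \<notin> DR\<^sup>+" using ac tr by blast
  have an': "\<forall>a b. (a, b) \<in> BR \<longrightarrow> (a, b) \<notin> DR\<^sup>+" using an tr by blast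
  have mx': "\<forall>a\<in>U. \<forall>b\<in>U. a \<noteq> b \<and> \<not> adj DR BR a b \<longrightarrow> (\<exists>W\<subseteq>U. msep DR BR a b W)"
  proof (intro ballI impI)
    fix a b assume a: "a \<in> U" and b: "b \<in> U" and ab: "a \<noteq> b \<and> \<not> adj DR BR a b"
    then have "\<not> adj D B a b" using adjR[OF a b] by simp
    then obtain W where W: "W \<subseteq> V" "msep D B a b W" using mx[of a b] a b ab by blast
    have "W - {Z} \<subseteq> U" using W by blast
    then show "\<exists>W\<subseteq>U. msep DR BR a b W" using msep_down[OF W(2) a] by blast
  qed
  show ?thesis unfolding is_MAG_def using dm ac' an' mx' by blast
qed

lemma GMP_restr:
  assumes "GMP P X V D B"
  shows "GMP P X U DR BR"
  unfolding GMP_def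
proof (intro ballI allI impI)
  fix a b W assume a: "a \<in> U" and b: "b \<in> U" and W: "W \<subseteq> U" and m: "msep DR BR a b W"
  have "msep D B a b W" by (rule msep_up[OF m a b W])
  then show "cond_indep P X a b W" using assms a b W unfolding GMP_def by blast
qed

lemma skel_restr:
  "mag_skeleton DR BR = mag_skeleton D B - {{Xi, Z}}"
proof
  show "mag_skeleton DR BR \<subseteq> mag_skeleton D B - {{Xi, Z}}"
  proof
    fix e assume "e \<in> mag_skeleton DR BR"
    then obtain a b where ab: "e = {a, b}" "(a, b) \<in> DR \<or> (a, b) \<in> BR" unfolding mag_skeleton_def by blast
    then have "Z \<notin> e" by blast
    then have "e \<noteq> {Xi, Z}" by blast
    moreover have "e \<in> mag_skeleton D B" using ab unfolding mag_skeleton_def by blast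
    ultimately show "e \<in> mag_skeleton D B - {{Xi, Z}}" by blast
  qed
next
  show "mag_skeleton D B - {{Xi, Z}} \<subseteq> mag_skeleton DR BR"
  proof
    fix e assume e: "e \<in> mag_skeleton D B - {{Xi, Z}}"
    then obtain a b where ab: "e = {a, b}" "(a, b) \<in> D \<or> (a, b) \<in> B" unfolding mag_skeleton_def by blast
    have v: "a \<in> V" "b \<in> V" using ab DV BV by auto
    have "a \<noteq> Z"
    proof
      assume "a = Z"
      then have "adj D B b Z" using ab unfolding adj_def by auto
      then have "b = Xi" by (rule H)
      then show False using e ab \<open>a = Z\<close> by (auto simp: insert_commute)
    qed
    moreover have "b \<noteq> Z"
    proof
      assume "b = Z"
      then have "adj D B a Z" using ab unfolding adj_def by auto
      then have "a = Xi" by (rule H)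
      then show False using e ab \<open>b = Z\<close> by auto
    qed
    ultimately show "e \<in> mag_skeleton DR BR" using ab v unfolding mag_skeleton_def by auto
  qed
qed

end

context extg begin

lemma nb_down1:
  assumes p: "is_path D1 B1 a b p" and a: "a \<in> U" and nb: "\<not> blocked DD B1 W p" and W: "Z \<notin> W"
  shows "\<not> blocked D1 B1 W p"
  unfolding not_blocked_iff
proof (intro allI impI)
  fix i assume i: "0 < i \<and> Suc i < length p"
  have pu: "set p \<subseteq> U" by (rule path1_in[OF p a])
  have l: "i < length p" using i by auto
  have "p ! i \<in> set p" using l by (simp only: nth_mem)
  then have u: "p ! i \<in> U" using pu by blast
  have o: "open3 DD B1 W (p ! (i - 1)) (p ! i) (p ! Suc i)" using nb i unfolding not_blocked_iff by blast
  show "open3 D1 B1 W (p ! (i - 1)) (p ! i) (p ! Suc i)" by (rule open_back[OF o u W])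
qed

lemma msep_aZ:
  assumes a: "a \<in> U" and aXi: "a \<noteq> Xi"
  shows "msep DD B1 a Z {Xi}"
  unfolding msep_def
proof (intro conjI allI impI)
  show "a \<notin> {Xi}" "Z \<notin> {Xi}" using aXi XiZ by auto
  fix p assume p: "is_path DD B1 a Z p"
  have ne: "p \<noteq> []" and hd: "hd p = a" and lst: "last p = Z"
    and ad: "\<And>j. Suc j < length p \<Longrightarrow> adj DD B1 (p ! j) (p ! Suc j)"
    using p unfolding is_path_def by auto
  define n where "n = length p"
  have h0: "p ! 0 = a" using ne hd by (simp add: hd_conv_nth)
  have hl: "p ! (n - 1) = Z" using ne lst unfolding n_def by (simp add: last_conv_nth)
  have aZ: "a \<noteq> Z" using a ZU by auto
  have n2: "2 \<le> n"
  proof (rule ccontr)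
    assume "\<not> 2 \<le> n"
    moreover have "n \<noteq> 0" using ne unfolding n_def by simp
    ultimately have "n = 1" by simp
    then show False using h0 hl aZ by simp
  qed
  define i where "i = n - 2"
  have si: "Suc i = n - 1" using n2 unfolding i_def by simp
  have "adj DD B1 (p ! i) (p ! Suc i)" using ad[of i] si n2 unfolding n_def by simp
  then have "adj DD B1 (p ! i) Z" using si hl by simp
  then have pi: "p ! i = Xi" by (rule adjZ)
  have i0: "0 < i" using pi h0 aXi by (cases i) auto
  have nc: "\<not> collider DD B1 p i"
    unfolding collider_def using pi si hl arr_Z_Xi by simp
  show "blocked DD B1 {Xi} p" unfolding blocked_def
    using i0 si n2 nc pi unfolding n_def by (intro exI[of _ i]) auto
qed

lemma MAG_ext:
  assumes M1: "is_MAG U D1 B1" and UV: "U = V - {Z}" and ZV: "Z \<in> V"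
  shows "is_MAG V DD B1"
proof -
  have dm1: "is_dmg U D1 B1" using M1 unfolding is_MAG_def by simp
  have d1: "\<And>a. (a, a) \<notin> D1 \<and> (a, a) \<notin> B1" using dm1 unfolding is_dmg_def by simp
  have d2: "\<And>a b. (a, b) \<in> D1 \<Longrightarrow> (b, a) \<notin> D1 \<and> (a, b) \<notin> B1"
    using dm1 unfolding is_dmg_def by simp
  have dm: "is_dmg V DD B1" unfolding is_dmg_def
  proof (intro conjI allI impI)
    show "DD \<subseteq> V \<times> V" using D1U UV ZV XiU by blast
    show "B1 \<subseteq> V \<times> V" using B1U UV by blast
    show "sym B1" by (rule symB1)
  next
    fix a show "(a, a) \<notin> DD" "(a, a) \<notin> B1" using d1[of a] XiZ by auto
  next
    fix a b assume ab: "(a, b) \<in> DD"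
    show "(b, a) \<notin> DD"
    proof
      assume ba: "(b, a) \<in> DD"
      show False
      proof (cases "(a, b) = (Xi, Z)")
        case True
        then have "(Z, Xi) \<in> D1" using ba XiZ by auto
        then show False using D1U ZU by auto
      next
        case False
        then have ab1: "(a, b) \<in> D1" using ab by auto
        then have "a \<noteq> Z" using D1U ZU by auto
        then have "(b, a) \<in> D1" using ba by auto
        then show False using d2[OF ab1] by blast
      qed
    qed
    show "(a, b) \<notin> B1"
    proof (cases "(a, b) = (Xi, Z)")
      case True
      then show ?thesis using B1U ZU by auto
    next
      case False
      then show ?thesis using ab d2[of a b] by auto
    qed
  qed
  have ac1: "\<And>v. (v, v) \<notin> D1\<^sup>+" using M1 unfolding is_MAG_def by simp
  have an1: "\<And>a b. (a, b) \<in> B1 \<Longrightarrow> (a, b) \<notin> D1\<^sup>+" using M1 unfolding is_MAG_def by simp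
  have mx1: "\<And>a b. a \<in> U \<Longrightarrow> b \<in> U \<Longrightarrow> a \<noteq> b \<Longrightarrow> \<not> adj D1 B1 a b \<Longrightarrow> \<exists>W\<subseteq>U. msep D1 B1 a b W"
    using M1 unfolding is_MAG_def by simp
  have ac: "\<forall>v. (v, v) \<notin> DD\<^sup>+"
  proof (intro allI notI)
    fix v assume vv: "(v, v) \<in> DD\<^sup>+"
    show False
    proof (cases "v = Z")
      case True
      from vv obtain y where "(v, y) \<in> DD" by (cases rule: converse_tranclE) auto
      then show False using True D1U ZU XiZ by auto
    next
      case False
      then show False using tDD[OF vv] ac1 by blast
    qed
  qed
  have an: "\<forall>a b. (a, b) \<in> B1 \<longrightarrow> (a, b) \<notin> DD\<^sup>+"
  proof (intro allI impI notI)
    fix a b assume ab: "(a, b) \<in> B1" "(a, b) \<in> DD\<^sup>+"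
    have "b \<noteq> Z" using ab B1U ZU by auto
    then show False using tDD[OF ab(2)] an1[OF ab(1)] by blast
  qed
  have mx: "\<forall>a\<in>V. \<forall>b\<in>V. a \<noteq> b \<and> \<not> adj DD B1 a b \<longrightarrow> (\<exists>W\<subseteq>V. msep DD B1 a b W)"
  proof (intro ballI impI)
    fix a b assume a: "a \<in> V" and b: "b \<in> V" and ab: "a \<noteq> b \<and> \<not> adj DD B1 a b"
    show "\<exists>W\<subseteq>V. msep DD B1 a b W"
    proof (cases "a = Z")
      case True
      then have bU: "b \<in> U" using b ab UV by auto
      have "b \<noteq> Xi" using ab True unfolding adj_def by auto
      then have "msep DD B1 b Z {Xi}" by (rule msep_aZ[OF bU])
      then have "msep DD B1 Z b {Xi}" by (rule msep_sym)
      then have "msep DD B1 a b {Xi}" using True by simp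
      moreover have "{Xi} \<subseteq> V" using XiU UV by auto
      ultimately show ?thesis by blast
    next
      case False
      then have aU: "a \<in> U" using a UV by auto
      show ?thesis
      proof (cases "b = Z")
        case True
        have "a \<noteq> Xi" using ab True unfolding adj_def by auto
        then have "msep DD B1 a Z {Xi}" by (rule msep_aZ[OF aU])
        moreover have "{Xi} \<subseteq> V" using XiU UV by auto
        ultimately show ?thesis using True by blast
      next
        case False
        then have bU: "b \<in> U" using b UV by auto
        have "\<not> adj D1 B1 a b" using ab adj1_DD by blast
        then obtain W where W: "W \<subseteq> U" "msep D1 B1 a b W" using mx1[OF aU bU] ab by blast
        have ZW: "Z \<notin> W" using W ZU by auto
        have "msep DD B1 a b W" unfolding msep_iff
        proof (intro conjI notI)
          show "a \<in> W \<Longrightarrow> False" "b \<in> W \<Longrightarrow> False" using W(2) unfolding msep_def by auto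
          assume "\<exists>p. is_path DD B1 a b p \<and> \<not> blocked DD B1 W p"
          then obtain p where p: "is_path DD B1 a b p" "\<not> blocked DD B1 W p" by blast
          have p1: "is_path D1 B1 a b p" by (rule pathDD_1[OF p(1)]) (use aU bU ZU in auto)
          have "\<not> blocked D1 B1 W p" by (rule nb_down1[OF p1 aU p(2) ZW])
          then show False using W(2) p1 unfolding msep_def by blast
        qed
        then show ?thesis using W UV by blast
      qed
    qed
  qed
  show ?thesis unfolding is_MAG_def by (intro conjI) (rule dm, rule ac, rule an, rule mx)
qed

lemma skel_ext: "mag_skeleton DD B1 = mag_skeleton D1 B1 \<union> {{Xi, Z}}"
  unfolding mag_skeleton_def by blast

lemma GMP_core:
  assumes G1: "GMP P X U D1 B1" and Fz: "\<forall>s\<in>set_pmf P. X Z s = f (X Xi s)"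
    and UV: "U = V - {Z}" and ZV: "Z \<in> V"
    and a: "a \<in> U" and b: "b \<in> V" and W: "W \<subseteq> V" and m: "msep DD B1 a b W"
  shows "cond_indep P X a b W"
proof -
  have g1: "\<And>a b W. a \<in> U \<Longrightarrow> b \<in> U \<Longrightarrow> W \<subseteq> U \<Longrightarrow> msep D1 B1 a b W \<Longrightarrow> cond_indep P X a b W"
    using G1 unfolding GMP_def by blast
  have aW: "a \<notin> W" and bW: "b \<notin> W" using m unfolding msep_def by auto
  show ?thesis
  proof (cases "b = Z")
    case True
    have ZW: "Z \<notin> W" using bW True by simp
    show ?thesis
    proof (cases "Xi \<in> W")
      case True
      then show ?thesis using ci_det[OF Fz] \<open>b = Z\<close> by blast
    next
      case False
      have aXi: "a \<noteq> Xi"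
      proof
        assume "a = Xi"
        then have "adj DD B1 a b" using \<open>b = Z\<close> unfolding adj_def by simp
        then show False using adj_edge_path m XiZ \<open>a = Xi\<close> \<open>b = Z\<close> by metis
      qed
      have "msep D1 B1 a Xi W" using L4 m \<open>b = Z\<close> a False by blast
      moreover have "W \<subseteq> U" using W ZW UV by blast
      ultimately have "cond_indep P X a Xi W" using g1 a XiU by blast
      then show ?thesis using ci_replace[OF Fz] \<open>b = Z\<close> by blast
    qed
  next
    case False
    then have bU: "b \<in> U" using b UV by auto
    define W' where "W' = W - {Z}"
    have W'U: "W' \<subseteq> U" using W UV W'_def by blast
    have m1: "msep D1 B1 a b W'" unfolding W'_def by (rule L1[OF m a])
    have ci1: "cond_indep P X a b W'" by (rule g1[OF a bU W'U m1])
    show ?thesis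
    proof (cases "Z \<in> W")
      case False
      then have "W' = W" unfolding W'_def by simp
      then show ?thesis using ci1 by simp
    next
      case True
      then have WW: "W = insert Z W'" unfolding W'_def by blast
      show ?thesis
      proof (cases "Xi \<in> W")
        case True
        then have "Xi \<in> W'" unfolding W'_def using XiZ by blast
        then show ?thesis unfolding WW using ci_addZ_det[OF Fz _ ci1] by blast
      next
        case False
        then have XiW': "Xi \<notin> W'" unfolding W'_def by blast
        show ?thesis
        proof (cases "a = Xi")
          case True
          then have "cond_indep P X Xi b W'" using ci1 by simp
          then show ?thesis unfolding WW using ci_Xi_addZ[OF Fz] True by simp
        next
          case aXi: False
          show ?thesis
          proof (cases "b = Xi")
            case True
            have "cond_indep P X Xi a W'" using cond_indep_sym[OF ci1] True by simp
            then have "cond_indep P X Xi a (insert Z W')" by (rule ci_Xi_addZ[OF Fz])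
            then show ?thesis unfolding WW using cond_indep_sym True by simp
          next
            case bXi: False
            have m2: "msep D1 B1 a b (insert Xi (W - {Z}))" by (rule L2[OF m a \<open>Z \<in> W\<close> aXi bXi])
            have XU: "insert Xi W' \<subseteq> U" using W'U XiU by blast
            have ci2: "cond_indep P X a b (insert Xi W')" using g1[OF a bU XU] m2 unfolding W'_def by blast
            have "msep D1 B1 a Xi W' \<or> msep D1 B1 b Xi W'"
              unfolding W'_def by (rule L3[OF m a bU \<open>Z \<in> W\<close> False])
            then show ?thesis
            proof
              assume "msep D1 B1 a Xi W'"
              then have "cond_indep P X a Xi W'" using g1[OF a XiU W'U] by blast
              then show ?thesis unfolding WW using ci_contract[OF Fz XiW' _ ci2] by blast
            next
              assume "msep D1 B1 b Xi W'"
              then have c3: "cond_indep P X b Xi W'" using g1[OF bU XiU W'U] by blast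
              have c4: "cond_indep P X b a (insert Xi W')" by (rule cond_indep_sym[OF ci2])
              have "cond_indep P X b a (insert Z W')" by (rule ci_contract[OF Fz XiW' c3 c4])
              then show ?thesis unfolding WW by (rule cond_indep_sym)
            qed
          qed
        qed
      qed
    qed
  qed
qed

lemma GMP_ext:
  assumes G1: "GMP P X U D1 B1" and Fz: "\<forall>s\<in>set_pmf P. X Z s = f (X Xi s)"
    and UV: "U = V - {Z}" and ZV: "Z \<in> V"
  shows "GMP P X V DD B1"
  unfolding GMP_def
proof (intro ballI allI impI)
  fix a b W assume a: "a \<in> V" and b: "b \<in> V" and W: "W \<subseteq> V" and m: "msep DD B1 a b W"
  show "cond_indep P X a b W"
  proof (cases "a = Z")
    case True
    have "b \<noteq> Z" using m True msep_refl_false by metis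
    then have bU: "b \<in> U" using b UV by auto
    have "msep DD B1 b a W" using m by (rule msep_sym)
    then have "cond_indep P X b a W" by (rule GMP_core[OF G1 Fz UV ZV bU a W])
    then show ?thesis by (rule cond_indep_sym)
  next
    case False
    then have aU: "a \<in> U" using a UV by auto
    show ?thesis by (rule GMP_core[OF G1 Fz UV ZV aU b W m])
  qed
qed

end

lemma vals_empty: "vals X {} s = vals X {} t"
  unfolding vals_def by (simp add: restrict_def)

lemma not_ci_XiZ:
  assumes Fz: "\<forall>s\<in>set_pmf P. X Z s = f (X Xi s)"
    and nd: "\<exists>x y. x \<noteq> y \<and> measure_pmf.prob P {\<omega>. X Z \<omega> = x} > 0 \<and> measure_pmf.prob P {\<omega>. X Z \<omega> = y} > 0"
  shows "\<not> cond_indep P X Xi Z {}"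
proof
  assume ci: "cond_indep P X Xi Z {}"
  obtain z1 z2 where z: "z1 \<noteq> z2" "measure_pmf.prob P {\<omega>. X Z \<omega> = z1} > 0" "measure_pmf.prob P {\<omega>. X Z \<omega> = z2} > 0"
    using nd by blast
  have "measure_pmf.prob P {\<omega>. X Z \<omega> = z1} \<noteq> 0" using z by simp
  then obtain s1 where s1: "s1 \<in> set_pmf P" "X Z s1 = z1" unfolding measure_pmf_zero_iff by blast
  define t where "t = X Xi s1"
  have ft: "f t = z1" using Fz s1 unfolding t_def by auto
  define w0 where "w0 = vals X {} s1"
  have all: "\<And>s. vals X {} s = w0" unfolding w0_def by (rule vals_empty)
  have eq: "measure_pmf.prob P {s. X Xi s = t \<and> X Z s = z2 \<and> vals X {} s = w0} * measure_pmf.prob P {s. vals X {} s = w0} =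
        measure_pmf.prob P {s. X Xi s = t \<and> vals X {} s = w0} * measure_pmf.prob P {s. X Z s = z2 \<and> vals X {} s = w0}"
    using ci unfolding cond_indep_def by blast
  have l0: "measure_pmf.prob P {s. X Xi s = t \<and> X Z s = z2 \<and> vals X {} s = w0} = 0"
    by (rule prob_empty') (use Fz ft z(1) in auto)
  have r1: "measure_pmf.prob P {s. X Xi s = t \<and> vals X {} s = w0} > 0"
    by (rule measure_pmf_posI[OF s1(1)]) (simp add: all t_def)
  have r2: "measure_pmf.prob P {s. X Z s = z2 \<and> vals X {} s = w0} > 0"
    using z(3) all by simp
  show False using eq l0 r1 r2 by simp
qed

lemma isolated_msep:
  assumes noadj: "\<And>x. \<not> adj D B x Z" and ne: "Xi \<noteq> Z"
  shows "msep D B Xi Z {}"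
  unfolding msep_def
proof (intro conjI allI impI)
  show "Xi \<notin> {}" "Z \<notin> {}" by auto
  fix p assume p: "is_path D B Xi Z p"
  have nep: "p \<noteq> []" and hd: "hd p = Xi" and lst: "last p = Z"
    and ad: "\<And>j. Suc j < length p \<Longrightarrow> adj D B (p ! j) (p ! Suc j)"
    using p unfolding is_path_def by auto
  define n where "n = length p"
  have h0: "p ! 0 = Xi" using nep hd by (simp add: hd_conv_nth)
  have hl: "p ! (n - 1) = Z" using nep lst unfolding n_def by (simp add: last_conv_nth)
  have n2: "2 \<le> n"
  proof (rule ccontr)
    assume "\<not> 2 \<le> n"
    moreover have "n \<noteq> 0" using nep unfolding n_def by simp
    ultimately have "n = 1" by simp
    then show False using h0 hl ne by simp
  qed
  have "adj D B (p ! (n - 2)) (p ! Suc (n - 2))" using ad[of "n - 2"] n2 unfolding n_def by simp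
  moreover have "Suc (n - 2) = n - 1" using n2 by simp
  ultimately have "adj D B (p ! (n - 2)) Z" using hl by simp
  then show "blocked D B {} p" using noadj by blast
qed

theorem theorem3p4:
  fixes P :: "'w pmf" and X :: "'v \<Rightarrow> 'w \<Rightarrow> 'a" and V :: "'v set"
    and Z Xi :: 'v and S1 :: "'v set set"
  assumes "finite V"
    and "\<forall>v\<in>V. \<exists>x y. x \<noteq> y \<and> measure_pmf.prob P {\<omega>. X v \<omega> = x} > 0
                          \<and> measure_pmf.prob P {\<omega>. X v \<omega> = y} > 0"
    and "acyclic (fd_edges P X V)"
    and "Z \<in> V"
    and "\<forall>w\<in>V. (Z, w) \<notin> fd_edges P X V"
    and "(Xi, Z) \<in> fd_edges P X V"
    and "harmonious P X (V - {Z}) S1"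
  shows "harmonious P X V (S1 \<union> {{Xi, Z}})"
proof -
  define U where "U = V - {Z}"
  have ZV: "Z \<in> V" using assms(4) .
  have h1: "is_ugraph U S1" and h2: "compatible_skel P X U S1"
    and h3: "\<not> (\<exists>E'. E' \<subset> S1 \<and> compatible_skel P X U E')"
    using assms(7) unfolding harmonious_def U_def by blast+
  obtain D1 B1 where M1: "is_MAG U D1 B1" and sk1: "mag_skeleton D1 B1 = S1" and G1: "GMP P X U D1 B1"
    using h2 unfolding compatible_skel_def by blast
  have XiV: "Xi \<in> V" and XiZ: "Xi \<noteq> Z" and fd: "FD P X Xi Z"
    using assms(6) unfolding fd_edges_def by auto
  obtain f where "AE \<omega> in measure_pmf P. X Z \<omega> = f (X Xi \<omega>)" using fd unfolding FD_def by blast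
  then have Fz: "\<forall>s\<in>set_pmf P. X Z s = f (X Xi s)" by (simp add: AE_measure_pmf_iff)
  have XiU: "Xi \<in> U" using XiV XiZ unfolding U_def by simp
  have ZU: "Z \<notin> U" unfolding U_def by simp
  have dm1: "is_dmg U D1 B1" using M1 unfolding is_MAG_def by simp
  have D1U: "D1 \<subseteq> U \<times> U" and B1U: "B1 \<subseteq> U \<times> U" and symB1: "sym B1"
    using dm1 unfolding is_dmg_def by simp_all
  interpret E: extg D1 B1 U Z Xi
    by (unfold_locales) (rule D1U, rule B1U, rule ZU, rule XiU, rule symB1)
  have UV: "U = V - {Z}" by (rule U_def)
  have ug: "is_ugraph V (S1 \<union> {{Xi, Z}})"
    unfolding is_ugraph_def
  proof
    fix e assume "e \<in> S1 \<union> {{Xi, Z}}"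
    then show "\<exists>a b. a \<noteq> b \<and> a \<in> V \<and> b \<in> V \<and> e = {a, b}"
    proof
      assume "e \<in> S1"
      then obtain a b where "a \<noteq> b" "a \<in> U" "b \<in> U" "e = {a, b}" using h1 unfolding is_ugraph_def by blast
      then show ?thesis unfolding U_def by blast
    next
      assume "e \<in> {{Xi, Z}}"
      then show ?thesis using XiV ZV XiZ by blast
    qed
  qed
  have comp: "compatible_skel P X V (S1 \<union> {{Xi, Z}})"
    unfolding compatible_skel_def
  proof (intro exI conjI)
    show "is_MAG V E.DD B1" by (rule E.MAG_ext[OF M1 UV ZV])
    show "mag_skeleton E.DD B1 = S1 \<union> {{Xi, Z}}" using E.skel_ext sk1 by simp
    show "GMP P X V E.DD B1" by (rule E.GMP_ext[OF G1 Fz UV ZV])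
  qed
  have minimal: "\<not> (\<exists>E'. E' \<subset> S1 \<union> {{Xi, Z}} \<and> compatible_skel P X V E')"
  proof
    assume "\<exists>E'. E' \<subset> S1 \<union> {{Xi, Z}} \<and> compatible_skel P X V E'"
    then obtain E' D' B' where sub: "E' \<subset> S1 \<union> {{Xi, Z}}" and M': "is_MAG V D' B'"
      and sk': "mag_skeleton D' B' = E'" and G': "GMP P X V D' B'"
      unfolding compatible_skel_def by blast
    have dm': "is_dmg V D' B'" using M' unfolding is_MAG_def by simp
    have irr: "\<And>a. (a, a) \<notin> D' \<and> (a, a) \<notin> B'" using dm' unfolding is_dmg_def by simp
    have noZS1: "\<And>x. {x, Z} \<notin> S1"
    proof
      fix x assume "{x, Z} \<in> S1"
      then obtain c d where "c \<in> U" "d \<in> U" "{x, Z} = {c, d}" using h1 unfolding is_ugraph_def by blast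
      then show False using ZU by (metis insertCI insertE singletonD)
    qed
    have adjE: "\<And>x. adj D' B' x Z \<Longrightarrow> {x, Z} \<in> E' \<and> x \<noteq> Z"
    proof -
      fix x assume "adj D' B' x Z"
      then have "(x, Z) \<in> D' \<or> (x, Z) \<in> B' \<or> (Z, x) \<in> D' \<or> (Z, x) \<in> B'" unfolding adj_def by blast
      moreover have "{Z, x} = {x, Z}" by blast
      ultimately have "{x, Z} \<in> mag_skeleton D' B'" unfolding mag_skeleton_def by blast
      moreover have "x \<noteq> Z" using \<open>adj D' B' x Z\<close> irr unfolding adj_def by blast
      ultimately show "{x, Z} \<in> E' \<and> x \<noteq> Z" using sk' by simp
    qed
    have H: "\<And>x. adj D' B' x Z \<Longrightarrow> x = Xi"
    proof -
      fix x assume a: "adj D' B' x Z"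
      then have "{x, Z} \<in> S1 \<union> {{Xi, Z}}" "x \<noteq> Z" using adjE sub by blast+
      then have "{x, Z} = {Xi, Z}" using noZS1 by blast
      then show "x = Xi" using \<open>x \<noteq> Z\<close> by (metis doubleton_eq_iff)
    qed
    interpret R: restr D' B' V Z Xi
      by (unfold_locales) (rule dm', rule ZV, rule H)
    have cR: "compatible_skel P X U (E' - {{Xi, Z}})"
      unfolding compatible_skel_def U_def
    proof (intro exI conjI)
      show "is_MAG (V - {Z}) R.DR R.BR" by (rule R.MAG_restr[OF M'])
      show "mag_skeleton R.DR R.BR = E' - {{Xi, Z}}" using R.skel_restr sk' by simp
      show "GMP P X (V - {Z}) R.DR R.BR" by (rule R.GMP_restr[OF G'])
    qed
    have sub1: "E' - {{Xi, Z}} \<subseteq> S1" using sub by blast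
    show False
    proof (cases "E' - {{Xi, Z}} = S1")
      case False
      then have "E' - {{Xi, Z}} \<subset> S1" using sub1 by blast
      then show False using h3 cR by blast
    next
      case True
      have nXZ: "{Xi, Z} \<notin> E'"
      proof
        assume "{Xi, Z} \<in> E'"
        then have "E' = S1 \<union> {{Xi, Z}}" using True by blast
        then show False using sub by blast
      qed
      have noadj: "\<And>x. \<not> adj D' B' x Z"
      proof
        fix x assume a: "adj D' B' x Z"
        then have "x = Xi" by (rule H)
        then show False using adjE[OF a] nXZ by simp
      qed
      have "msep D' B' Xi Z {}" by (rule isolated_msep[OF noadj XiZ])
      then have "cond_indep P X Xi Z {}" using G' XiV ZV unfolding GMP_def by blast
      moreover have "\<not> cond_indep P X Xi Z {}"
        by (rule not_ci_XiZ[OF Fz]) (use assms(2) ZV in blast)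
      ultimately show False by blast
    qed
  qed
  show ?thesis unfolding harmonious_def using ug comp minimal by blast
qed

end
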